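(* Let $d \geq 1$, $\alpha < 1/(d+1)$ and $\delta > 0$. Then with overwhelming probability a random graph \[ H \sim H\big(n-(2d-1),\ n^{-(d-1)\alpha}(1-n^{-\alpha})^{d},\ n^{-d\alpha}(1-n^{-\alpha})^{d-1},\ 0,\ 0,\ 1-n^{-\alpha}\big) \] has spectral gap of its normalized Laplacian larger than $1-\delta$.
   Context: For $N\in\mathbb N$ and probabilities $p_A,p_B,p_{eA},p_{eB},p_{eAB}$, $H(N,p_A,p_B,p_{eA},p_{eB},p_{eAB})$ is the random graph obtained by putting each element of $[N]$ independently into $A$ with probability $p_A$, into $B$ with probability $p_B$, or discarding it otherwise; the vertex set is $A\cup B$, and pairs inside $A$, inside $B$, and between $A$ and $B$ are edges independently with probabilities $p_{eA}$, $p_{eB}$, $p_{eAB}$ respectively. For a graph without isolated vertices with adjacency matrix $A$ and degree matrix $D$, the normalized Laplacian is $I - D^{-1/2}AD^{-1/2}$ and its spectral gap is its second smallest eigenvalue $\lambda_2$. Here $\alpha>0$. "With overwhelming probability" means with probability at least $1-n^{-\omega(1)}$ as $n\to\infty$. *)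

theory Defs
  imports "HOL-Probability.Probability" "Jordan_Normal_Form.Char_Poly"
begin

text \<open>Labels of the elements of [N] = {0..<N}: in A, in B, or discarded.\<close>
datatype side = SideA | SideB | Out

text \<open>Each element goes to A with probability pA, to B with probability pB,
  and is discarded otherwise (valid whenever pA + pB \<le> 1).\<close>
definition side_pmf :: "real \<Rightarrow> real \<Rightarrow> side pmf" where
  "side_pmf pA pB =
     do { a \<leftarrow> bernoulli_pmf pA;
          if a then return_pmf SideA
          else do { b \<leftarrow> bernoulli_pmf (pB / (1 - pA));
                    return_pmf (if b then SideB else Out) } }"

definition edge_prob :: "(nat \<Rightarrow> side) \<Rightarrow> real \<Rightarrow> real \<Rightarrow> real \<Rightarrow> nat \<times> nat \<Rightarrow> real" where
  "edge_prob lab peA peB peAB ij =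
     (case (lab (fst ij), lab (snd ij)) of
        (SideA, SideA) \<Rightarrow> peA
      | (SideB, SideB) \<Rightarrow> peB
      | (SideA, SideB) \<Rightarrow> peAB
      | (SideB, SideA) \<Rightarrow> peAB
      | _ \<Rightarrow> 0)"

type_synonym graph = "nat set \<times> nat set set"

definition pairs_below :: "nat \<Rightarrow> (nat \<times> nat) set" where
  "pairs_below N = {(i, j). i < j \<and> j < N}"

definition H_graph :: "nat \<Rightarrow> real \<Rightarrow> real \<Rightarrow> real \<Rightarrow> real \<Rightarrow> real \<Rightarrow> graph pmf" where
  "H_graph N pA pB peA peB peAB =
     do { lab \<leftarrow> Pi_pmf {..<N} Out (\<lambda>_. side_pmf pA pB);
          c \<leftarrow> Pi_pmf (pairs_below N) False
                 (\<lambda>ij. bernoulli_pmf (edge_prob lab peA peB peAB ij));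
          let V = {i. i < N \<and> lab i \<noteq> Out};
          return_pmf (V, {{i, j} | i j. (i, j) \<in> pairs_below N \<and> c (i, j) \<and> i \<in> V \<and> j \<in> V}) }"

definition gdeg :: "graph \<Rightarrow> nat \<Rightarrow> nat" where
  "gdeg G v = card {u \<in> fst G. {u, v} \<in> snd G}"

definition no_isolated :: "graph \<Rightarrow> bool" where
  "no_isolated G \<longleftrightarrow> (\<forall>v \<in> fst G. gdeg G v > 0)"

definition norm_laplacian :: "graph \<Rightarrow> real mat" where
  "norm_laplacian G =
     (let vs = sorted_list_of_set (fst G)
      in mat (length vs) (length vs) (\<lambda>(i, j).
           (if i = j then 1 else 0)
           - (if {vs ! i, vs ! j} \<in> snd G
              then 1 / sqrt (real (gdeg G (vs ! i)) * real (gdeg G (vs ! j))) else 0)))"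

text \<open>Eigenvalues with multiplicity (roots of the characteristic polynomial; all real
  since the matrix is symmetric), in increasing order.\<close>
definition sorted_eigenvalues :: "real mat \<Rightarrow> real list" where
  "sorted_eigenvalues M = sorted_list_of_multiset (proots (char_poly M))"

definition spectral_gap :: "graph \<Rightarrow> real" where
  "spectral_gap G = sorted_eigenvalues (norm_laplacian G) ! 1"

end

theory Submission
  imports Defs "Jordan_Normal_Form.Schur_Decomposition" "HOL-Real_Asymp.Real_Asymp"
begin

no_notation Inner_Product.real_inner_class.inner (infix "\<bullet>" 70)


lemma real_vec_sq_pos: fixes v :: "real vec"
  assumes "v \<in> carrier_vec n" "v \<noteq> 0\<^sub>v n" shows "v \<bullet> v > 0"
  using conjugate_square_greater_0_vec[OF assms(1)] assms(2) by simp

lemma real_vec_sq_nonneg: fixes v :: "real vec"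
  shows "v \<bullet> v \<ge> 0"
  using conjugate_square_ge_0_vec[of v] by simp

lemma sym_sprod: fixes L :: "real mat"
  assumes L: "L \<in> carrier_mat m m" and sym: "transpose_mat L = L"
    and v: "v \<in> carrier_vec m" and w: "w \<in> carrier_vec m"
  shows "v \<bullet> (L *\<^sub>v w) = (L *\<^sub>v v) \<bullet> w"
  using transpose_vec_mult_scalar[OF L w v] sym by simp

lemma two_eig_contra:
  fixes L :: "real mat"
  assumes L: "L \<in> carrier_mat m m" and sym: "transpose_mat L = L"
    and u: "u \<in> carrier_vec m"
    and Q: "\<And>x. x \<in> carrier_vec m \<Longrightarrow> x \<noteq> 0\<^sub>v m \<Longrightarrow> u \<bullet> x = 0 \<Longrightarrow> x \<bullet> (L *\<^sub>v x) > c * (x \<bullet> x)"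
    and v: "v \<in> carrier_vec m" "v \<noteq> 0\<^sub>v m" "L *\<^sub>v v = a \<cdot>\<^sub>v v" "a \<le> c"
    and w: "w \<in> carrier_vec m" "w \<noteq> 0\<^sub>v m" "L *\<^sub>v w = b \<cdot>\<^sub>v w" "b \<le> c"
    and vw: "v \<bullet> w = 0"
  shows False
proof -
  have vv: "v \<bullet> v > 0" by (rule real_vec_sq_pos[OF v(1,2)])
  have ww: "w \<bullet> w > 0" by (rule real_vec_sq_pos[OF w(1,2)])
  have wv: "w \<bullet> v = 0" using vw comm_scalar_prod[OF v(1) w(1)] by simp
  show False
  proof (cases "u \<bullet> v = 0")
    case True
    have "v \<bullet> (L *\<^sub>v v) = a * (v \<bullet> v)" using v by simp
    also have "\<dots> \<le> c * (v \<bullet> v)" using vv v(4) by (simp add: mult_right_mono)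
    finally show False using Q[OF v(1) v(2) True] by simp
  next
    case False
    define s where "s = u \<bullet> w"
    define t where "t = u \<bullet> v"
    define x where "x = s \<cdot>\<^sub>v v - t \<cdot>\<^sub>v w"
    have x: "x \<in> carrier_vec m" unfolding x_def using v w by auto
    have ux: "u \<bullet> x = 0" unfolding x_def s_def t_def
      using u v w by (simp add: scalar_prod_minus_distrib)
    have Lx: "L *\<^sub>v x = (s * a) \<cdot>\<^sub>v v - (t * b) \<cdot>\<^sub>v w"
      unfolding x_def using L v w
      by (simp add: mult_minus_distrib_mat_vec mult_mat_vec smult_smult_assoc)
    have xx: "x \<bullet> x = s * s * (v \<bullet> v) + t * t * (w \<bullet> w)"
      unfolding x_def using v w vw wv
      by (simp add: scalar_prod_minus_distrib minus_scalar_prod_distrib)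
    have xLx: "x \<bullet> (L *\<^sub>v x) = s * s * a * (v \<bullet> v) + t * t * b * (w \<bullet> w)"
      unfolding Lx unfolding x_def using v w vw wv
      by (simp add: scalar_prod_minus_distrib minus_scalar_prod_distrib)
    have "t \<noteq> 0" using False t_def by simp
    have "s * s * (v \<bullet> v) \<ge> 0" using vv by simp
    moreover have "t * t * (w \<bullet> w) > 0" using ww \<open>t \<noteq> 0\<close> by (auto simp add: zero_less_mult_iff)
    ultimately have "x \<bullet> x > 0" using xx by linarith
    hence xn: "x \<noteq> 0\<^sub>v m" by auto
    have "s * s * a * (v \<bullet> v) \<le> s * s * c * (v \<bullet> v)" using v(4) vv
      by (simp add: mult_left_mono mult_right_mono)
    moreover have "t * t * b * (w \<bullet> w) \<le> t * t * c * (w \<bullet> w)" using w(4) ww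
      by (simp add: mult_left_mono mult_right_mono)
    ultimately have "x \<bullet> (L *\<^sub>v x) \<le> c * (x \<bullet> x)" unfolding xLx xx by (simp add: algebra_simps)
    thus False using Q[OF x xn ux] by simp
  qed
qed


lemma mat_unit_col: fixes W :: "real mat"
  assumes W: "W \<in> carrier_mat m m" and j: "j < m"
  shows "W *\<^sub>v unit_vec m j = col W j"
proof (rule eq_vecI)
  fix i assume "i < dim_vec (col W j)"
  hence i: "i < m" using W by simp
  have "(W *\<^sub>v unit_vec m j) $ i = row W i \<bullet> unit_vec m j" using W i by simp
  also have "\<dots> = unit_vec m j \<bullet> row W i" using W i by (intro comm_scalar_prod[of _ m]) auto
  also have "\<dots> = row W i $ j" using W i j by (intro scalar_prod_left_unit) auto
  finally show "(W *\<^sub>v unit_vec m j) $ i = col W j $ i" using W i j by simp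
qed (use W in simp)

lemma double_root_eigvecs:
  fixes L :: "real mat"
  assumes L: "L \<in> carrier_mat m m" and sym: "transpose_mat L = L"
    and ord: "Polynomial.order e (char_poly L) \<ge> 2"
  shows "\<exists>v w. v \<in> carrier_vec m \<and> v \<noteq> 0\<^sub>v m \<and> L *\<^sub>v v = e \<cdot>\<^sub>v v \<and>
     w \<in> carrier_vec m \<and> w \<noteq> 0\<^sub>v m \<and> L *\<^sub>v w = e \<cdot>\<^sub>v w \<and> v \<bullet> w = 0"
proof -
  have cpm: "degree (char_poly L) = m \<and> coeff (char_poly L) m = 1"
    by (rule degree_monic_char_poly[OF L])
  hence cp0: "char_poly L \<noteq> 0" by auto
  have "poly (char_poly L) e = 0" using ord cp0 Polynomial.order_root[of "char_poly L" e] by auto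
  hence ev: "eigenvalue L e" using eigenvalue_root_char_poly[OF L] by simp
  define v where "v = find_eigenvector L e"
  from find_eigenvector[OF L ev] have "eigenvector L v e" unfolding v_def .
  hence v: "v \<in> carrier_vec m" and v0: "v \<noteq> 0\<^sub>v m" and Lv: "L *\<^sub>v v = e \<cdot>\<^sub>v v"
    using L unfolding eigenvector_def by auto
  have n: "m \<noteq> 0" using v v0 by (metis carrier_vecD eq_vecI less_nat_zero_code zero_carrier_vec)
  then obtain m' where mm: "m = Suc m'" by (cases m) auto
  interpret cof_vec_space m "TYPE(real)" .
  define b where "b = basis_completion v"
  define ws where "ws = gram_schmidt m b"
  define W where "W = mat_of_cols m ws"
  define W' where "W' = corthogonal_inv W"
  define A' where "A' = W' * L * W"
  from basis_completion[OF v v0, folded b_def]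
  have dist_b: "distinct b" 
    and indep: "\<not> lin_dep (set b)" and b: "set b \<subseteq> carrier_vec m" and hdb: "hd b = v" 
    and len_b: "length b = m" by auto
  from hdb len_b n obtain vs where bv: "b = v # vs" by (cases b, auto)
  from gram_schmidt_result[OF b dist_b indep refl, folded ws_def]
  have ws: "set ws \<subseteq> carrier_vec m" "corthogonal ws" "length ws = m" 
    by (auto simp: len_b)
  from gram_schmidt_hd[OF v, of vs, folded bv] have hdws: "hd ws = v" unfolding ws_def .
  have orth_W: "corthogonal_mat W" using orthogonal_mat_of_cols ws unfolding W_def.
  have W: "W \<in> carrier_mat m m"
    using ws unfolding W_def using mat_of_cols_carrier(1)[of m ws] by auto
  have W': "W' \<in> carrier_mat m m" unfolding W'_def corthogonal_inv_def using W 
    by (auto simp: mat_of_rows_def)  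
  from corthogonal_inv_result[OF orth_W] 
  have W'W: "W' * W = 1\<^sub>m m" unfolding W'_def inverts_mat_def using W' W'_def by auto
  have WW': "W * W' = 1\<^sub>m m" using mat_mult_left_right_inverse[OF W' W W'W] .
  have A': "A' \<in> carrier_mat m m" using W W' L unfolding A'_def by auto
  have col0: "col A' 0 = vec m (\<lambda> i. if i = 0 then e else 0)"
    unfolding A'_def W'_def W_def
    using corthogonal_col_ev_0[OF L v v0 Lv n hdws ws] .
  have ws0: "ws ! 0 = v" using hdws ws(3) n by (metis hd_conv_nth list.size(3))
  have colW0: "col W 0 = v" unfolding W_def using ws ws0 n v by (subst col_mat_of_cols) auto
  have A'0: "A' $$ (i, 0) = (if i = 0 then e else 0)" if "i < m" for i
    using arg_cong[OF col0, of "\<lambda>x. x $ i"] that A' n by simp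
  define A1 where "A1 = mat 1 1 (\<lambda>_. e)"
  define A2 where "A2 = mat 1 m' (\<lambda>(i,j). A' $$ (0, Suc j))"
  define A3 where "A3 = mat m' m' (\<lambda>(i,j). A' $$ (Suc i, Suc j))"
  have A1: "A1 \<in> carrier_mat 1 1" and A2: "A2 \<in> carrier_mat 1 m'" and A3: "A3 \<in> carrier_mat m' m'"
    unfolding A1_def A2_def A3_def by auto
  have block: "A' = four_block_mat A1 A2 (0\<^sub>m m' 1) A3"
  proof (rule eq_matI)
    fix i j assume ij: "i < dim_row (four_block_mat A1 A2 (0\<^sub>m m' 1) A3)"
      "j < dim_col (four_block_mat A1 A2 (0\<^sub>m m' 1) A3)"
    hence i: "i < m" and j: "j < m" using A1 A3 mm by auto
    show "A' $$ (i, j) = four_block_mat A1 A2 (0\<^sub>m m' 1) A3 $$ (i, j)"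
      using i j A'0[OF i] mm unfolding A1_def A2_def A3_def
      by (cases i; cases j) auto
  qed (use A' A1 A3 mm in auto)
  have cpA1: "char_poly A1 = [:-e, 1:]"
    by (simp add: A1_def char_poly_defs det_def sign_def)
  have "char_poly A' = char_poly A1 * char_poly A3"
    unfolding block by (rule char_poly_four_block_zeros_col[OF A1 A2 A3])
  hence cpA': "char_poly A' = [:-e, 1:] * char_poly A3" using cpA1 by simp
  have LWA: "W * A' = L * W"
  proof -
    have "W * A' = (W * W') * (L * W)" unfolding A'_def using W W' L 
      assoc_mult_mat[OF W W' mult_carrier_mat[OF L W]] by simp
    also have "\<dots> = L * W" using WW' L by simp
    finally show ?thesis .
  qed
  have Lsim: "L = W * A' * W'"
  proof -
    have "W * A' * W' = L * W * W'" using LWA by simp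
    also have "\<dots> = L * (W * W')" using L W W' by simp
    finally show ?thesis using WW' L by simp
  qed
  have "similar_mat L A'"
    by (rule similar_matI[where n=m and P=W and Q=W'], insert L A' W W' WW' W'W Lsim, auto)
  hence cpLA: "char_poly L = char_poly A'" by (rule char_poly_similar)
  have "[:-e, 1:] ^ 2 dvd char_poly L" using ord order_divides by blast
  hence "[:-e, 1:] * [:-e, 1:] dvd [:-e, 1:] * char_poly A3" using cpLA cpA'
    by (simp add: power2_eq_square)
  hence "[:-e, 1:] dvd char_poly A3" by (subst (asm) dvd_times_left_cancel_iff) simp_all
  hence "poly (char_poly A3) e = 0" using poly_eq_0_iff_dvd by blast
  hence ev3: "eigenvalue A3 e" using eigenvalue_root_char_poly[OF A3] by simp
  define y where "y = find_eigenvector A3 e"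
  from find_eigenvector[OF A3 ev3] have "eigenvector A3 y e" unfolding y_def .
  hence y: "y \<in> carrier_vec m'" and y0: "y \<noteq> 0\<^sub>v m'" and A3y: "A3 *\<^sub>v y = e \<cdot>\<^sub>v y"
    using A3 unfolding eigenvector_def by auto
  define z where "z = vec m (\<lambda>i. if i = 0 then 0 else y $ (i - 1))"
  have z: "z \<in> carrier_vec m" unfolding z_def by simp
  have z0: "z \<noteq> 0\<^sub>v m"
  proof
    assume "z = 0\<^sub>v m"
    have "y $ i = 0" if "i < m'" for i
    proof -
      have "z $ Suc i = 0" using \<open>z = 0\<^sub>v m\<close> that mm by simp
      thus ?thesis unfolding z_def using that mm by simp
    qed
    hence "y = 0\<^sub>v m'" using y by (intro eq_vecI) auto
    thus False using y0 by simp
  qed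
  define k where "k = (A' *\<^sub>v z) $ 0"
  have A'z: "A' *\<^sub>v z = e \<cdot>\<^sub>v z + k \<cdot>\<^sub>v unit_vec m 0"
  proof (rule eq_vecI)
    fix i assume "i < dim_vec (e \<cdot>\<^sub>v z + k \<cdot>\<^sub>v unit_vec m 0)"
    hence i: "i < m" by simp
    show "(A' *\<^sub>v z) $ i = (e \<cdot>\<^sub>v z + k \<cdot>\<^sub>v unit_vec m 0) $ i"
    proof (cases i)
      case 0 thus ?thesis using i n unfolding k_def z_def by simp
    next
      case (Suc i')
      have i': "i' < m'" using i Suc mm by simp
      have "(A' *\<^sub>v z) $ i = (\<Sum>j<m. A' $$ (i, j) * z $ j)"
        using A' i z by (simp add: scalar_prod_def lessThan_atLeast0)
      also have "\<dots> = A' $$ (i, 0) * z $ 0 + (\<Sum>j<m'. A' $$ (i, Suc j) * z $ Suc j)"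
        unfolding mm by (rule sum.lessThan_Suc_shift)
      also have "\<dots> = (\<Sum>j<m'. A3 $$ (i', j) * y $ j)"
        unfolding z_def A3_def Suc using mm i' by simp
      also have "\<dots> = (A3 *\<^sub>v y) $ i'" using A3 y i' by (simp add: scalar_prod_def lessThan_atLeast0)
      also have "\<dots> = e * y $ i'" using A3y i' y by simp
      also have "\<dots> = (e \<cdot>\<^sub>v z + k \<cdot>\<^sub>v unit_vec m 0) $ i" unfolding z_def Suc using i Suc by simp
      finally show ?thesis .
    qed
  qed (use A' in simp)
  define w where "w = W *\<^sub>v z"
  have w: "w \<in> carrier_vec m" unfolding w_def using W z by simp
  have Wu: "W *\<^sub>v unit_vec m 0 = v" using mat_unit_col[OF W] n colW0 by simp
  have Lw: "L *\<^sub>v w = e \<cdot>\<^sub>v w + k \<cdot>\<^sub>v v"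
  proof -
    have "L *\<^sub>v w = (L * W) *\<^sub>v z" unfolding w_def using L W z by simp
    also have "\<dots> = W *\<^sub>v (A' *\<^sub>v z)" unfolding LWA[symmetric] using W A' z by simp
    also have "\<dots> = W *\<^sub>v (e \<cdot>\<^sub>v z) + W *\<^sub>v (k \<cdot>\<^sub>v unit_vec m 0)" unfolding A'z
      using W z by (simp add: mult_add_distrib_mat_vec)
    also have "\<dots> = e \<cdot>\<^sub>v w + k \<cdot>\<^sub>v v" unfolding w_def Wu[symmetric]
      using W z by (simp add: mult_mat_vec)
    finally show ?thesis .
  qed
  have vv: "v \<bullet> v > 0" by (rule real_vec_sq_pos[OF v v0])
  have "v \<bullet> (L *\<^sub>v w) = (L *\<^sub>v v) \<bullet> w" by (rule sym_sprod[OF L sym v w])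
  hence "e * (v \<bullet> w) + k * (v \<bullet> v) = e * (v \<bullet> w)" unfolding Lw Lv
    using v w by (simp add: scalar_prod_add_distrib)
  hence "k = 0" using vv by simp
  hence Lw: "L *\<^sub>v w = e \<cdot>\<^sub>v w" using Lw w v by simp
  have W'v: "W' *\<^sub>v v = unit_vec m 0"
    unfolding Wu[symmetric] using W' W W'W by (simp flip: assoc_mult_mat_vec)
  have W'w: "W' *\<^sub>v w = z" unfolding w_def using W' W W'W z by (simp flip: assoc_mult_mat_vec)
  define t where "t = (v \<bullet> w) / (v \<bullet> v)"
  define w2 where "w2 = w - t \<cdot>\<^sub>v v"
  have w2: "w2 \<in> carrier_vec m" unfolding w2_def using w v by simp
  have Lw2: "L *\<^sub>v w2 = e \<cdot>\<^sub>v w2"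
  proof -
    have "L *\<^sub>v w2 = L *\<^sub>v w - L *\<^sub>v (t \<cdot>\<^sub>v v)" unfolding w2_def
      using L w v by (simp add: mult_minus_distrib_mat_vec)
    also have "\<dots> = e \<cdot>\<^sub>v w - t \<cdot>\<^sub>v (e \<cdot>\<^sub>v v)" using Lw Lv L v by (simp add: mult_mat_vec)
    also have "\<dots> = e \<cdot>\<^sub>v w2" unfolding w2_def using w v
      by (intro eq_vecI) (auto simp: algebra_simps)
    finally show ?thesis .
  qed
  have vw2: "v \<bullet> w2 = 0" unfolding w2_def t_def using v w vv
    by (simp add: scalar_prod_minus_distrib)
  have w20: "w2 \<noteq> 0\<^sub>v m"
  proof
    assume "w2 = 0\<^sub>v m"
    hence "w = t \<cdot>\<^sub>v v"
    proof -
      assume h: "w2 = 0\<^sub>v m"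
      show ?thesis
      proof (rule eq_vecI)
        fix i assume "i < dim_vec (t \<cdot>\<^sub>v v)"
        hence i: "i < m" using v by simp
        have "w2 $ i = 0" using h i by simp
        thus "w $ i = (t \<cdot>\<^sub>v v) $ i" unfolding w2_def using i w v by simp
      qed (use w v in simp)
    qed
    hence "z = t \<cdot>\<^sub>v unit_vec m 0" using W'w W'v W' v by (simp add: mult_mat_vec)
    hence "z $ 0 = t" using n by simp
    hence "t = 0" unfolding z_def using n by simp
    hence "w = 0\<^sub>v m" using \<open>w = t \<cdot>\<^sub>v v\<close> v by simp
    moreover have "W' *\<^sub>v 0\<^sub>v m = 0\<^sub>v m" using W' by (intro eq_vecI) auto
    ultimately have "z = 0\<^sub>v m" using W'w by simp
    thus False using z0 by simp
  qed
  show ?thesis using v v0 Lv w2 w20 Lw2 vw2 by blast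
qed


lemma gap_from_quadratic:
  fixes L :: "real mat"
  assumes L: "L \<in> carrier_mat m m" and sym: "transpose_mat L = L"
    and u: "u \<in> carrier_vec m"
    and Q: "\<And>x. x \<in> carrier_vec m \<Longrightarrow> x \<noteq> 0\<^sub>v m \<Longrightarrow> u \<bullet> x = 0 \<Longrightarrow> x \<bullet> (L *\<^sub>v x) > c * (x \<bullet> x)"
    and r12: "r1 \<noteq> r2" "poly (char_poly L) r1 = 0" "poly (char_poly L) r2 = 0"
  shows "sorted_eigenvalues L ! 1 > c"
proof (rule ccontr)
  assume neg: "\<not> sorted_eigenvalues L ! 1 > c"
  define p where "p = char_poly L"
  have p0: "p \<noteq> 0" using degree_monic_char_poly[OF L] unfolding p_def by auto
  define S where "S = proots p"
  define xs where "xs = sorted_list_of_multiset S"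
  have r1S: "r1 \<in># S" and r2S: "r2 \<in># S" using r12 p0 unfolding S_def p_def by auto
  have "r2 \<in># S - {#r1#}" using r2S r12(1) by (simp add: in_diff_count)
  hence "size (S - {#r1#}) \<noteq> 0" by auto
  moreover have "size (S - {#r1#}) = size S - 1" using r1S by (rule size_Diff_singleton)
  ultimately have "size S \<ge> 2" using r1S by (metis One_nat_def Suc_1 Suc_leI diff_is_0_eq' not_less_eq_eq)
  hence len: "length xs \<ge> 2" unfolding xs_def by (metis mset_sorted_list_of_multiset size_mset)
  then obtain a b rest where xs: "xs = a # b # rest"
    by (cases xs; cases "tl xs") auto
  have sorted: "sorted xs" unfolding xs_def by simp
  hence ab: "a \<le> b" unfolding xs by simp
  have bc: "b \<le> c" using neg unfolding sorted_eigenvalues_def p_def[symmetric] S_def[symmetric]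
      xs_def[symmetric] xs by simp
  have setxs: "set xs = set_mset S" unfolding xs_def by simp
  have ra: "poly p a = 0" and rb: "poly p b = 0"
    using setxs p0 unfolding xs S_def by auto
  have ev: "eigenvalue L a" "eigenvalue L b" using ra rb eigenvalue_root_char_poly[OF L]
    unfolding p_def by auto
  show False
  proof (cases "a = b")
    case False
    define va where "va = find_eigenvector L a"
    define vb where "vb = find_eigenvector L b"
    from find_eigenvector[OF L ev(1)] have "eigenvector L va a" unfolding va_def .
    hence va: "va \<in> carrier_vec m" "va \<noteq> 0\<^sub>v m" "L *\<^sub>v va = a \<cdot>\<^sub>v va"
      using L unfolding eigenvector_def by auto
    from find_eigenvector[OF L ev(2)] have "eigenvector L vb b" unfolding vb_def .
    hence vb: "vb \<in> carrier_vec m" "vb \<noteq> 0\<^sub>v m" "L *\<^sub>v vb = b \<cdot>\<^sub>v vb"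
      using L unfolding eigenvector_def by auto
    have "va \<bullet> (L *\<^sub>v vb) = (L *\<^sub>v va) \<bullet> vb" by (rule sym_sprod[OF L sym va(1) vb(1)])
    hence "b * (va \<bullet> vb) = a * (va \<bullet> vb)" using va vb by simp
    hence "va \<bullet> vb = 0" using False by simp
    moreover have "a \<le> c" "b \<le> c" using ab bc by simp_all
    ultimately show False using two_eig_contra[OF L sym u Q va(1-3) _ vb(1-3)] by blast
  next
    case True
    have "count S a \<ge> 2"
    proof -
      have "count (mset xs) a \<ge> 2" unfolding xs using True by simp
      thus ?thesis unfolding xs_def by simp
    qed
    hence "Polynomial.order a (char_poly L) \<ge> 2" using p0 unfolding S_def p_def by simp
    from double_root_eigvecs[OF L sym this] obtain v w where
      vw: "v \<in> carrier_vec m" "v \<noteq> 0\<^sub>v m" "L *\<^sub>v v = a \<cdot>\<^sub>v v"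
      "w \<in> carrier_vec m" "w \<noteq> 0\<^sub>v m" "L *\<^sub>v w = a \<cdot>\<^sub>v w" "v \<bullet> w = 0" by blast
    have "a \<le> c" using ab bc by simp
    show False using two_eig_contra[OF L sym u Q vw(1-3) \<open>a \<le> c\<close> vw(4-6) \<open>a \<le> c\<close> vw(7)] .
  qed
qed


lemma quad_bound:
  fixes I SA SB :: "'a set" and R :: "'a \<Rightarrow> 'a \<Rightarrow> bool" and dg f :: "'a \<Rightarrow> real"
  assumes fin: "finite I" and part: "SA \<union> SB = I" "SA \<inter> SB = {}"
    and Rbip: "\<And>i j. i \<in> I \<Longrightarrow> j \<in> I \<Longrightarrow> R i j \<Longrightarrow> (i \<in> SA \<and> j \<in> SB) \<or> (i \<in> SB \<and> j \<in> SA)"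
    and Rsym: "\<And>i j. R i j = R j i"
    and dpos: "\<And>i. i \<in> I \<Longrightarrow> dg i > 0"
    and missA: "\<And>i. i \<in> SA \<Longrightarrow> real (card {j\<in>SB. \<not> R i j}) \<le> \<eta> * dg i"
    and missB: "\<And>j. j \<in> SB \<Longrightarrow> real (card {i\<in>SA. \<not> R i j}) \<le> \<eta> * dg j"
    and orth: "(\<Sum>i\<in>SA. f i / sqrt (dg i)) = 0"
  shows "(\<Sum>i\<in>I. \<Sum>j\<in>I. f i * f j * (if R i j then 1 / sqrt (dg i * dg j) else 0))
           \<le> \<eta> * (\<Sum>i\<in>I. (f i)\<^sup>2)"
proof -
  have finA: "finite SA" and finB: "finite SB" using fin part by auto
  have dis: "x \<notin> SB" if "x \<in> SA" for x using part(2) that by blast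
  have inI: "x \<in> I" if "x \<in> SA \<or> x \<in> SB" for x using part(1) that by blast
  have nRA: "\<not> R i j" if "i \<in> SA" "j \<in> SA" for i j
    using Rbip[OF inI inI, of i j] that dis by blast
  have nRB: "\<not> R i j" if "i \<in> SB" "j \<in> SB" for i j
    using Rbip[OF inI inI, of i j] that dis by blast
  define y where "y i = f i / sqrt (dg i)" for i
  define T where "T i j = (if R i j then y i * y j else 0)" for i j
  have Teq: "f i * f j * (if R i j then 1 / sqrt (dg i * dg j) else 0) = T i j"
    if "i \<in> I" "j \<in> I" for i j
    using dpos[OF that(1)] dpos[OF that(2)] unfolding T_def y_def
    by (simp add: real_sqrt_mult)
  have "(\<Sum>i\<in>I. \<Sum>j\<in>I. f i * f j * (if R i j then 1 / sqrt (dg i * dg j) else 0))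
        = (\<Sum>i\<in>I. \<Sum>j\<in>I. T i j)" using Teq by simp
  also have "\<dots> = (\<Sum>i\<in>SA. \<Sum>j\<in>I. T i j) + (\<Sum>i\<in>SB. \<Sum>j\<in>I. T i j)"
    unfolding part(1)[symmetric] using finA finB part(2) by (rule sum.union_disjoint)
  also have "(\<Sum>i\<in>SA. \<Sum>j\<in>I. T i j) = (\<Sum>i\<in>SA. \<Sum>j\<in>SB. T i j)"
  proof (rule sum.cong[OF refl])
    fix i assume i: "i \<in> SA"
    have "(\<Sum>j\<in>I. T i j) = (\<Sum>j\<in>SA. T i j) + (\<Sum>j\<in>SB. T i j)"
      unfolding part(1)[symmetric] using finA finB part(2) by (rule sum.union_disjoint)
    moreover have "(\<Sum>j\<in>SA. T i j) = 0"
      using i nRA nRB unfolding T_def by (intro sum.neutral ballI) simp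
    ultimately show "(\<Sum>j\<in>I. T i j) = (\<Sum>j\<in>SB. T i j)" by simp
  qed
  also have "(\<Sum>i\<in>SB. \<Sum>j\<in>I. T i j) = (\<Sum>i\<in>SB. \<Sum>j\<in>SA. T i j)"
  proof (rule sum.cong[OF refl])
    fix i assume i: "i \<in> SB"
    have "(\<Sum>j\<in>I. T i j) = (\<Sum>j\<in>SA. T i j) + (\<Sum>j\<in>SB. T i j)"
      unfolding part(1)[symmetric] using finA finB part(2) by (rule sum.union_disjoint)
    moreover have "(\<Sum>j\<in>SB. T i j) = 0"
      using i nRA nRB unfolding T_def by (intro sum.neutral ballI) simp
    ultimately show "(\<Sum>j\<in>I. T i j) = (\<Sum>j\<in>SA. T i j)" by simp
  qed
  also have "(\<Sum>i\<in>SB. \<Sum>j\<in>SA. T i j) = (\<Sum>i\<in>SA. \<Sum>j\<in>SB. T i j)"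
    by (subst sum.swap) (auto simp: T_def Rsym ac_simps intro!: sum.cong)
  finally have step1: "(\<Sum>i\<in>I. \<Sum>j\<in>I. f i * f j * (if R i j then 1 / sqrt (dg i * dg j) else 0))
        = 2 * (\<Sum>i\<in>SA. \<Sum>j\<in>SB. T i j)" by simp
  define NT where "NT i j = (if R i j then 0 else y i * y j)" for i j
  have "(\<Sum>i\<in>SA. \<Sum>j\<in>SB. T i j) = (\<Sum>i\<in>SA. \<Sum>j\<in>SB. y i * y j - NT i j)"
    unfolding T_def NT_def by (intro sum.cong) auto
  also have "\<dots> = (\<Sum>i\<in>SA. y i) * (\<Sum>j\<in>SB. y j) - (\<Sum>i\<in>SA. \<Sum>j\<in>SB. NT i j)"
    by (simp add: sum_subtractf sum_product)
  also have "(\<Sum>i\<in>SA. y i) = 0" using orth unfolding y_def .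
  finally have step2: "(\<Sum>i\<in>SA. \<Sum>j\<in>SB. T i j) = - (\<Sum>i\<in>SA. \<Sum>j\<in>SB. NT i j)" by simp
  define U where "U i j = (if R i j then 0 else (y i)\<^sup>2 + (y j)\<^sup>2)" for i j
  have "- 2 * NT i j \<le> U i j" for i j
  proof -
    have "0 \<le> (y i + y j)\<^sup>2" by simp
    thus ?thesis unfolding NT_def U_def by (auto simp: power2_eq_square algebra_simps)
  qed
  hence "-2 * (\<Sum>i\<in>SA. \<Sum>j\<in>SB. NT i j) \<le> (\<Sum>i\<in>SA. \<Sum>j\<in>SB. U i j)"
    by (simp add: sum_distrib_left sum_mono)
  also have "(\<Sum>i\<in>SA. \<Sum>j\<in>SB. U i j) =
      (\<Sum>i\<in>SA. \<Sum>j\<in>SB. (if R i j then 0 else (y i)\<^sup>2)) + (\<Sum>i\<in>SA. \<Sum>j\<in>SB. (if R i j then 0 else (y j)\<^sup>2))"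
    unfolding U_def by (simp add: sum.distrib[symmetric] if_distrib cong: if_cong)
  also have "(\<Sum>i\<in>SA. \<Sum>j\<in>SB. (if R i j then 0 else (y i)\<^sup>2)) = (\<Sum>i\<in>SA. (y i)\<^sup>2 * real (card {j\<in>SB. \<not> R i j}))"
  proof (rule sum.cong[OF refl])
    fix i assume "i \<in> SA"
    have "(\<Sum>j\<in>SB. (if R i j then 0 else (y i)\<^sup>2)) = (\<Sum>j\<in>{j\<in>SB. \<not> R i j}. (y i)\<^sup>2)"
      by (subst sum.inter_filter[OF finB]) (auto intro!: sum.cong)
    thus "(\<Sum>j\<in>SB. (if R i j then 0 else (y i)\<^sup>2)) = (y i)\<^sup>2 * real (card {j\<in>SB. \<not> R i j})"
      by simp
  qed
  also have "(\<Sum>i\<in>SA. \<Sum>j\<in>SB. (if R i j then 0 else (y j)\<^sup>2)) = (\<Sum>j\<in>SB. (y j)\<^sup>2 * real (card {i\<in>SA. \<not> R i j}))"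
  proof (subst sum.swap, rule sum.cong[OF refl])
    fix j assume "j \<in> SB"
    have "(\<Sum>i\<in>SA. (if R i j then 0 else (y j)\<^sup>2)) = (\<Sum>i\<in>{i\<in>SA. \<not> R i j}. (y j)\<^sup>2)"
      by (subst sum.inter_filter[OF finA]) (auto intro!: sum.cong)
    thus "(\<Sum>i\<in>SA. (if R i j then 0 else (y j)\<^sup>2)) = (y j)\<^sup>2 * real (card {i\<in>SA. \<not> R i j})"
      by simp
  qed
  also have "(\<Sum>i\<in>SA. (y i)\<^sup>2 * real (card {j\<in>SB. \<not> R i j})) \<le> (\<Sum>i\<in>SA. \<eta> * (f i)\<^sup>2)"
  proof (rule sum_mono)
    fix i assume i: "i \<in> SA"
    have d: "dg i > 0" using dpos i part by auto
    have "(y i)\<^sup>2 * real (card {j\<in>SB. \<not> R i j}) \<le> (y i)\<^sup>2 * (\<eta> * dg i)"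
      using missA[OF i] by (simp add: mult_left_mono)
    also have "\<dots> = \<eta> * (f i)\<^sup>2" unfolding y_def using d by (simp add: power_divide)
    finally show "(y i)\<^sup>2 * real (card {j\<in>SB. \<not> R i j}) \<le> \<eta> * (f i)\<^sup>2" .
  qed
  also have "(\<Sum>j\<in>SB. (y j)\<^sup>2 * real (card {i\<in>SA. \<not> R i j})) \<le> (\<Sum>j\<in>SB. \<eta> * (f j)\<^sup>2)"
  proof (rule sum_mono)
    fix j assume j: "j \<in> SB"
    have d: "dg j > 0" using dpos j part by auto
    have "(y j)\<^sup>2 * real (card {i\<in>SA. \<not> R i j}) \<le> (y j)\<^sup>2 * (\<eta> * dg j)"
      using missB[OF j] by (simp add: mult_left_mono)
    also have "\<dots> = \<eta> * (f j)\<^sup>2" unfolding y_def using d by (simp add: power_divide)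
    finally show "(y j)\<^sup>2 * real (card {i\<in>SA. \<not> R i j}) \<le> \<eta> * (f j)\<^sup>2" .
  qed
  also have "(\<Sum>i\<in>SA. \<eta> * (f i)\<^sup>2) + (\<Sum>j\<in>SB. \<eta> * (f j)\<^sup>2) = \<eta> * (\<Sum>i\<in>I. (f i)\<^sup>2)"
    unfolding part(1)[symmetric] using finA finB part(2)
    by (simp add: sum.union_disjoint sum_distrib_left[symmetric] distrib_left)
  finally have "-2 * (\<Sum>i\<in>SA. \<Sum>j\<in>SB. NT i j) \<le> \<eta> * (\<Sum>i\<in>I. (f i)\<^sup>2)"
    by simp
  thus ?thesis using step1 step2 by simp
qed


lemma sum_vs:
  assumes "distinct vs"
  shows "(\<Sum>j<length vs. g (vs ! j)) = (\<Sum>w\<in>set vs. g w)"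
  using sum.reindex_bij_betw[OF bij_betw_nth[OF assms refl refl], of g] .

lemma spec_gap_generic:
  fixes G :: graph and A B :: "nat set" and \<eta> \<delta> :: real
  assumes fin: "finite (fst G)" and part: "A \<union> B = fst G" "A \<inter> B = {}"
    and An: "A \<noteq> {}" and Bn: "B \<noteq> {}"
    and Ebip: "\<And>u v. u \<in> fst G \<Longrightarrow> v \<in> fst G \<Longrightarrow> {u, v} \<in> snd G \<Longrightarrow> (u \<in> A \<and> v \<in> B) \<or> (u \<in> B \<and> v \<in> A)"
    and dpos: "\<And>v. v \<in> fst G \<Longrightarrow> gdeg G v > 0"
    and missA: "\<And>a. a \<in> A \<Longrightarrow> real (card {b\<in>B. {a, b} \<notin> snd G}) \<le> \<eta> * real (gdeg G a)"
    and missB: "\<And>b. b \<in> B \<Longrightarrow> real (card {a\<in>A. {a, b} \<notin> snd G}) \<le> \<eta> * real (gdeg G b)"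
    and \<eta>\<delta>: "\<eta> < \<delta>"
  shows "card (fst G) \<ge> 2 \<and> no_isolated G \<and> spectral_gap G > 1 - \<delta>"
proof -
  define V where "V = fst G"
  define E where "E = snd G"
  define vs where "vs = sorted_list_of_set V"
  define m where "m = length vs"
  define dg where "dg v = real (gdeg G v)" for v
  define R where "R v w = ({v, w} \<in> E)" for v w
  define Wt where "Wt v w = (if R v w then 1 / sqrt (dg v * dg w) else 0)" for v w
  have finV: "finite V" using fin V_def by simp
  have dist: "distinct vs" and setvs: "set vs = V" unfolding vs_def using finV by auto
  have sumV: "(\<Sum>j<m. g (vs ! j)) = (\<Sum>w\<in>V. g w)" for g :: "nat \<Rightarrow> real"
    unfolding m_def using sum_vs[OF dist, of g] setvs by simp
  have vsV: "vs ! i \<in> V" if "i < m" for i using that setvs unfolding m_def by auto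
  have dgpos: "dg v > 0" if "v \<in> V" for v using dpos[of v] that unfolding dg_def V_def by simp
  have Rsym: "R v w = R w v" for v w unfolding R_def by (simp add: insert_commute)
  have degcard: "card {w\<in>V. R v w} = gdeg G v" for v
    unfolding gdeg_def R_def V_def E_def by (simp add: insert_commute)
  have degsum: "(\<Sum>w\<in>V. (if R v w then h else 0)) = h * dg v" for v h
  proof -
    have "(\<Sum>w\<in>V. (if R v w then h else 0)) = (\<Sum>w\<in>{w\<in>V. R v w}. h)"
      by (subst sum.inter_filter[OF finV]) simp
    also have "\<dots> = h * dg v" using degcard[of v] unfolding dg_def by simp
    finally show ?thesis .
  qed
  have Rbip: "(u \<in> A \<and> v \<in> B) \<or> (u \<in> B \<and> v \<in> A)" if "u \<in> V" "v \<in> V" "R u v" for u v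
    using Ebip[of u v] that unfolding V_def R_def E_def by simp
  have mV: "m = card V" unfolding m_def vs_def by simp
  obtain a0 where a0: "a0 \<in> A" using An by blast
  obtain b0 where b0: "b0 \<in> B" using Bn by blast
  have "a0 \<noteq> b0" using a0 b0 part(2) by blast
  hence "{a0, b0} \<subseteq> V" "card {a0, b0} = 2" using a0 b0 part(1) unfolding V_def by auto
  hence card2: "card V \<ge> 2" using card_mono[OF finV] by metis
  have noiso: "no_isolated G" unfolding no_isolated_def using dpos by blast
  define L where "L = norm_laplacian G"
  have Lmat: "L = mat m m (\<lambda>(i, j). (if i = j then 1 else 0) - Wt (vs ! i) (vs ! j))"
    unfolding L_def norm_laplacian_def Let_def Wt_def R_def dg_def m_def vs_def V_def E_def
    by simp
  have L: "L \<in> carrier_mat m m" unfolding Lmat by simp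
  have Lidx: "L $$ (i, j) = (if i = j then 1 else 0) - Wt (vs ! i) (vs ! j)" if "i < m" "j < m" for i j
    unfolding Lmat using that by simp
  have sym: "transpose_mat L = L"
  proof (rule eq_matI)
    fix i j assume "i < dim_row L" "j < dim_col L"
    hence ij: "i < m" "j < m" using L by auto
    show "transpose_mat L $$ (i, j) = L $$ (i, j)"
      using ij L by (simp add: Lidx Wt_def Rsym mult.commute)
  qed (use L in auto)
  have Lx: "(L *\<^sub>v x) $ i = (\<Sum>j<m. L $$ (i, j) * x $ j)" if "x \<in> carrier_vec m" "i < m" for x i
    using that L by (simp add: scalar_prod_def atLeast0LessThan row_def)
  have sprod: "y \<bullet> x = (\<Sum>j<m. y $ j * x $ j)" if "x \<in> carrier_vec m" for x y
    using that by (simp add: scalar_prod_def atLeast0LessThan)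
  have Lsum: "(\<Sum>j<m. L $$ (i, j) * g (vs ! j)) = g (vs ! i) - (\<Sum>w\<in>V. Wt (vs ! i) w * g w)"
    if i: "i < m" for i g
  proof -
    have "(\<Sum>j<m. L $$ (i, j) * g (vs ! j)) =
        (\<Sum>j<m. (if i = j then g (vs ! j) else 0)) - (\<Sum>j<m. Wt (vs ! i) (vs ! j) * g (vs ! j))"
    proof -
      have "(\<Sum>j<m. L $$ (i, j) * g (vs ! j)) =
        (\<Sum>j<m. (if i = j then g (vs ! j) else 0) - Wt (vs ! i) (vs ! j) * g (vs ! j))"
        by (intro sum.cong refl) (auto simp: Lidx[OF i] left_diff_distrib)
      thus ?thesis by (simp add: sum_subtractf)
    qed
    also have "(\<Sum>j<m. (if i = j then g (vs ! j) else 0)) = g (vs ! i)" using i by simp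
    also have "(\<Sum>j<m. Wt (vs ! i) (vs ! j) * g (vs ! j)) = (\<Sum>w\<in>V. Wt (vs ! i) w * g w)"
      by (rule sumV)
    finally show ?thesis .
  qed
  define z0 where "z0 = vec m (\<lambda>i. sqrt (dg (vs ! i)))"
  have Wsum0: "(\<Sum>w\<in>V. Wt v w * sqrt (dg w)) = sqrt (dg v)" if v: "v \<in> V" for v
  proof -
    have "(\<Sum>w\<in>V. Wt v w * sqrt (dg w)) = (\<Sum>w\<in>V. (if R v w then 1 / sqrt (dg v) else 0))"
    proof (rule sum.cong[OF refl])
      fix w assume w: "w \<in> V"
      show "Wt v w * sqrt (dg w) = (if R v w then 1 / sqrt (dg v) else 0)"
        using dgpos[OF v] dgpos[OF w] unfolding Wt_def by (simp add: real_sqrt_mult)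
    qed
    also have "\<dots> = dg v / sqrt (dg v)" using degsum by simp
    also have "\<dots> = sqrt (dg v)" using dgpos[OF v] by (simp add: real_div_sqrt)
    finally show ?thesis .
  qed
  have z0: "z0 \<in> carrier_vec m" unfolding z0_def by simp
  have "m > 0" using card2 mV by simp
  have z00: "z0 \<noteq> 0\<^sub>v m"
  proof
    assume "z0 = 0\<^sub>v m"
    hence "z0 $ 0 = 0" using \<open>m > 0\<close> by simp
    thus False using dgpos[OF vsV[OF \<open>m > 0\<close>]] \<open>m > 0\<close> unfolding z0_def by auto
  qed
  have Lz0: "L *\<^sub>v z0 = 0 \<cdot>\<^sub>v z0"
  proof (rule eq_vecI)
    fix i assume "i < dim_vec (0 \<cdot>\<^sub>v z0)"
    hence i: "i < m" unfolding z0_def by simp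
    have "(L *\<^sub>v z0) $ i = (\<Sum>j<m. L $$ (i, j) * sqrt (dg (vs ! j)))"
      using Lx[OF z0 i] unfolding z0_def by simp
    also have "\<dots> = 0" using Lsum[OF i, of "\<lambda>v. sqrt (dg v)"] Wsum0[OF vsV[OF i]] by simp
    finally show "(L *\<^sub>v z0) $ i = (0 \<cdot>\<^sub>v z0) $ i" using i unfolding z0_def by simp
  qed (use L z0 in simp)
  have root0: "poly (char_poly L) 0 = 0"
    using eigenvalue_root_char_poly[OF L, of 0] z0 z00 Lz0 L
    unfolding eigenvalue_def eigenvector_def by auto
  define s where "s v = (if v \<in> A then 1 else - 1 :: real)" for v
  define z2 where "z2 = vec m (\<lambda>i. s (vs ! i) * sqrt (dg (vs ! i)))"
  have Wsum2: "(\<Sum>w\<in>V. Wt v w * (s w * sqrt (dg w))) = - s v * sqrt (dg v)" if v: "v \<in> V" for v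
  proof -
    have "(\<Sum>w\<in>V. Wt v w * (s w * sqrt (dg w))) = (\<Sum>w\<in>V. (if R v w then - s v / sqrt (dg v) else 0))"
    proof (rule sum.cong[OF refl])
      fix w assume w: "w \<in> V"
      have sw: "R v w \<Longrightarrow> s w = - s v" using Rbip[OF v w] part(2) unfolding s_def by auto
      show "Wt v w * (s w * sqrt (dg w)) = (if R v w then - s v / sqrt (dg v) else 0)"
        using dgpos[OF v] dgpos[OF w] sw unfolding Wt_def by (simp add: real_sqrt_mult)
    qed
    also have "\<dots> = - s v * dg v / sqrt (dg v)" using degsum by simp
    also have "\<dots> = - s v * (dg v / sqrt (dg v))" by simp
    also have "\<dots> = - s v * sqrt (dg v)" using dgpos[OF v] by (simp add: real_div_sqrt)
    finally show ?thesis .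
  qed
  have z2: "z2 \<in> carrier_vec m" unfolding z2_def by simp
  have z20: "z2 \<noteq> 0\<^sub>v m"
  proof
    assume "z2 = 0\<^sub>v m"
    hence "z2 $ 0 = 0" using \<open>m > 0\<close> by simp
    thus False using dgpos[OF vsV[OF \<open>m > 0\<close>]] \<open>m > 0\<close> unfolding z2_def s_def
      by (auto split: if_splits)
  qed
  have Lz2: "L *\<^sub>v z2 = 2 \<cdot>\<^sub>v z2"
  proof (rule eq_vecI)
    fix i assume "i < dim_vec (2 \<cdot>\<^sub>v z2)"
    hence i: "i < m" unfolding z2_def by simp
    have "(L *\<^sub>v z2) $ i = (\<Sum>j<m. L $$ (i, j) * (s (vs ! j) * sqrt (dg (vs ! j))))"
      using Lx[OF z2 i] unfolding z2_def by simp
    also have "\<dots> = 2 * (s (vs ! i) * sqrt (dg (vs ! i)))"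
      using Lsum[OF i, of "\<lambda>v. s v * sqrt (dg v)"] Wsum2[OF vsV[OF i]] by simp
    finally show "(L *\<^sub>v z2) $ i = (2 \<cdot>\<^sub>v z2) $ i" using i unfolding z2_def by simp
  qed (use L z2 in simp)
  have root2: "poly (char_poly L) 2 = 0"
    using eigenvalue_root_char_poly[OF L, of 2] z2 z20 Lz2 L
    unfolding eigenvalue_def eigenvector_def by auto
  define u where "u = vec m (\<lambda>i. if vs ! i \<in> A then 1 / sqrt (dg (vs ! i)) else 0)"
  have u: "u \<in> carrier_vec m" unfolding u_def by simp
  have inj: "inj_on ((!) vs) {..<m}" using dist unfolding m_def by (simp add: inj_on_nth)
  have Q: "x \<bullet> (L *\<^sub>v x) > (1 - \<delta>) * (x \<bullet> x)"
    if x: "x \<in> carrier_vec m" and x0: "x \<noteq> 0\<^sub>v m" and ux: "u \<bullet> x = 0" for x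
  proof -
    define f where "f v = x $ (inv_into {..<m} ((!) vs) v)" for v
    have fx: "f (vs ! i) = x $ i" if "i < m" for i
      unfolding f_def using inv_into_f_f[OF inj, of i] that by simp
    have xx: "x \<bullet> x = (\<Sum>v\<in>V. (f v)\<^sup>2)"
    proof -
      have "x \<bullet> x = (\<Sum>j<m. (f (vs ! j))\<^sup>2)" using sprod[OF x] fx by (simp add: power2_eq_square)
      also have "\<dots> = (\<Sum>v\<in>V. (f v)\<^sup>2)" by (rule sumV)
      finally show ?thesis .
    qed
    have xLx: "x \<bullet> (L *\<^sub>v x) = (\<Sum>v\<in>V. (f v)\<^sup>2) - (\<Sum>v\<in>V. \<Sum>w\<in>V. f v * f w * Wt v w)"
    proof -
      have "x \<bullet> (L *\<^sub>v x) = (\<Sum>i<m. f (vs ! i) * (\<Sum>j<m. L $$ (i, j) * f (vs ! j)))"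
        using sprod[of "L *\<^sub>v x" x] L x Lx[OF x] fx
        by (simp add: comm_scalar_prod[of x m "L *\<^sub>v x"])
      also have "\<dots> = (\<Sum>i<m. f (vs ! i) * (f (vs ! i) - (\<Sum>w\<in>V. Wt (vs ! i) w * f w)))"
        by (intro sum.cong refl) (simp add: Lsum)
      also have "\<dots> = (\<Sum>v\<in>V. f v * (f v - (\<Sum>w\<in>V. Wt v w * f w)))" by (rule sumV)
      also have "\<dots> = (\<Sum>v\<in>V. (f v)\<^sup>2) - (\<Sum>v\<in>V. \<Sum>w\<in>V. f v * f w * Wt v w)"
        by (simp add: right_diff_distrib sum_subtractf sum_distrib_left power2_eq_square ac_simps)
      finally show ?thesis .
    qed
    have orth: "(\<Sum>v\<in>A. f v / sqrt (dg v)) = 0"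
    proof -
      have "u \<bullet> x = (\<Sum>j<m. u $ j * x $ j)" by (rule sprod[OF x])
      also have "\<dots> = (\<Sum>j<m. (if vs ! j \<in> A then f (vs ! j) / sqrt (dg (vs ! j)) else 0))"
        by (intro sum.cong refl) (auto simp: u_def fx)
      also have "\<dots> = (\<Sum>v\<in>V. (if v \<in> A then f v / sqrt (dg v) else 0))" by (rule sumV)
      also have "\<dots> = (\<Sum>v\<in>V \<inter> A. f v / sqrt (dg v))" using finV by (rule sum.inter_restrict[symmetric])
      also have "V \<inter> A = A" using part unfolding V_def by blast
      finally show ?thesis using ux by simp
    qed
    have missA': "real (card {j\<in>B. \<not> R a j}) \<le> \<eta> * dg a" if "a \<in> A" for a
      using missA[OF that] unfolding R_def E_def dg_def by simp
    have missB': "real (card {i\<in>A. \<not> R i b}) \<le> \<eta> * dg b" if "b \<in> B" for b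
      using missB[OF that] unfolding R_def E_def dg_def by simp
    have qb: "(\<Sum>v\<in>V. \<Sum>w\<in>V. f v * f w * (if R v w then 1 / sqrt (dg v * dg w) else 0))
           \<le> \<eta> * (\<Sum>v\<in>V. (f v)\<^sup>2)"
      by (rule quad_bound[OF finV part(1)[folded V_def] part(2) Rbip Rsym dgpos missA' missB' orth])
    have "x \<bullet> x > 0" using x x0 by (rule real_vec_sq_pos)
    hence pos: "(\<Sum>v\<in>V. (f v)\<^sup>2) > 0" using xx by simp
    have "x \<bullet> (L *\<^sub>v x) \<ge> (1 - \<eta>) * (\<Sum>v\<in>V. (f v)\<^sup>2)"
      using xLx qb unfolding Wt_def by (simp add: algebra_simps)
    moreover have "(1 - \<eta>) * (\<Sum>v\<in>V. (f v)\<^sup>2) > (1 - \<delta>) * (\<Sum>v\<in>V. (f v)\<^sup>2)"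
      using pos \<eta>\<delta> by (simp add: mult_strict_right_mono)
    ultimately show ?thesis using xx by simp
  qed
  have "sorted_eigenvalues L ! 1 > 1 - \<delta>"
    by (rule gap_from_quadratic[OF L sym u Q, of 0 2]) (use root0 root2 in auto)
  hence "spectral_gap G > 1 - \<delta>" unfolding spectral_gap_def L_def .
  thus ?thesis using card2 noiso V_def by simp
qed


definition mkG :: "nat \<Rightarrow> (nat \<Rightarrow> side) \<Rightarrow> (nat \<times> nat \<Rightarrow> bool) \<Rightarrow> graph" where
  "mkG N lab c = (let V = {i. i < N \<and> lab i \<noteq> Out}
     in (V, {{i, j} | i j. (i, j) \<in> pairs_below N \<and> c (i, j) \<and> i \<in> V \<and> j \<in> V}))"

lemma card_split_filter: "finite S \<Longrightarrow> card S = card {x\<in>S. P x} + card {x\<in>S. \<not> P x}"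
  by (subst card_Un_disjoint[symmetric]) (auto intro!: arg_cong[of _ _ card])

lemma mkG_good:
  fixes N :: nat and lab :: "nat \<Rightarrow> side" and c :: "nat \<times> nat \<Rightarrow> bool" and \<epsilon> \<delta> :: real
  defines "A \<equiv> {i. i < N \<and> lab i = SideA}" and "B \<equiv> {i. i < N \<and> lab i = SideB}"
  assumes supp: "\<And>i j. (i, j) \<in> pairs_below N \<Longrightarrow> c (i, j) \<Longrightarrow>
      (lab i = SideA \<and> lab j = SideB) \<or> (lab i = SideB \<and> lab j = SideA)"
    and An: "A \<noteq> {}" and Bn: "B \<noteq> {}"
    and missA: "\<And>a. a \<in> A \<Longrightarrow> real (card {b\<in>B. \<not> c (min a b, max a b)}) \<le> \<epsilon> * real (card B)"
    and missB: "\<And>b. b \<in> B \<Longrightarrow> real (card {a\<in>A. \<not> c (min a b, max a b)}) \<le> \<epsilon> * real (card A)"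
    and \<epsilon>: "0 \<le> \<epsilon>" "\<epsilon> < 1" "\<epsilon> / (1 - \<epsilon>) < \<delta>"
  shows "card (fst (mkG N lab c)) \<ge> 2 \<and> no_isolated (mkG N lab c) \<and> spectral_gap (mkG N lab c) > 1 - \<delta>"
proof -
  define G where "G = mkG N lab c"
  define V where "V = {i. i < N \<and> lab i \<noteq> Out}"
  define E where "E = {{i, j} | i j. (i, j) \<in> pairs_below N \<and> c (i, j) \<and> i \<in> V \<and> j \<in> V}"
  define P where "P u v = c (min u v, max u v)" for u v
  have G: "fst G = V" "snd G = E" unfolding G_def mkG_def V_def E_def Let_def by simp_all
  have finV: "finite V" unfolding V_def by simp
  have part: "A \<union> B = V" "A \<inter> B = {}" unfolding A_def B_def V_def by (auto intro: side.exhaust)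
  have finA: "finite A" and finB: "finite B" unfolding A_def B_def by simp_all
  have Psym: "P u v = P v u" for u v unfolding P_def by (simp add: min.commute max.commute)
  have Echar: "{u, v} \<in> E \<longleftrightarrow> u \<noteq> v \<and> P u v" if u: "u \<in> V" and v: "v \<in> V" for u v
  proof
    assume "{u, v} \<in> E"
    then obtain i j where ij: "{u, v} = {i, j}" "(i, j) \<in> pairs_below N" "c (i, j)"
      unfolding E_def by blast
    hence "i < j" unfolding pairs_below_def by simp
    with ij(1) have "(u = i \<and> v = j) \<or> (u = j \<and> v = i)" by (auto simp: doubleton_eq_iff)
    thus "u \<noteq> v \<and> P u v" using ij(3) \<open>i < j\<close> unfolding P_def by auto
  next
    assume h: "u \<noteq> v \<and> P u v"
    have "u < N" "v < N" using u v unfolding V_def by auto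
    show "{u, v} \<in> E"
    proof (cases "u < v")
      case True
      hence "(u, v) \<in> pairs_below N \<and> c (u, v)" using h \<open>v < N\<close> unfolding pairs_below_def P_def by simp
      thus ?thesis unfolding E_def using u v by blast
    next
      case False
      hence "v < u" using h by simp
      hence "(v, u) \<in> pairs_below N \<and> c (v, u)" using h \<open>u < N\<close> unfolding pairs_below_def P_def by simp
      hence "{v, u} \<in> E" unfolding E_def using u v by blast
      thus ?thesis by (simp add: insert_commute)
    qed
  qed
  have Pbip: "(u \<in> A \<and> v \<in> B) \<or> (u \<in> B \<and> v \<in> A)" if "u \<in> V" "v \<in> V" "u \<noteq> v" "P u v" for u v
  proof -
    have "(min u v, max u v) \<in> pairs_below N" using that unfolding pairs_below_def V_def
      by (auto simp: min_def max_def)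
    from supp[OF this] that(4) have "(lab (min u v) = SideA \<and> lab (max u v) = SideB) \<or>
        (lab (min u v) = SideB \<and> lab (max u v) = SideA)" unfolding P_def by simp
    thus ?thesis using that(1,2) unfolding A_def B_def V_def by (cases "u \<le> v") (auto simp: min_def max_def)
  qed
  have Ebip: "(u \<in> A \<and> v \<in> B) \<or> (u \<in> B \<and> v \<in> A)" if "u \<in> V" "v \<in> V" "{u, v} \<in> E" for u v
    using Pbip[OF that(1,2)] Echar[OF that(1,2)] that(3) by blast
  have degA: "gdeg G a = card {b\<in>B. P a b}" if a: "a \<in> A" for a
  proof -
    have "{u \<in> V. {u, a} \<in> E} = {b\<in>B. P a b}"
    proof (intro equalityI subsetI)
      fix u assume "u \<in> {u \<in> V. {u, a} \<in> E}"
      hence u: "u \<in> V" "{u, a} \<in> E" by auto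
      have aV: "a \<in> V" using a part by blast
      have "u \<noteq> a" "P u a" using Echar[OF u(1) aV] u(2) by auto
      moreover have "u \<in> B" using Pbip[OF u(1) aV \<open>u \<noteq> a\<close> \<open>P u a\<close>] a part(2) by blast
      ultimately show "u \<in> {b\<in>B. P a b}" using Psym by simp
    next
      fix u assume "u \<in> {b\<in>B. P a b}"
      hence u: "u \<in> B" "P a u" by auto
      have uV: "u \<in> V" and aV: "a \<in> V" using u a part by blast+
      have "u \<noteq> a" using u a part(2) by blast
      thus "u \<in> {u \<in> V. {u, a} \<in> E}" using Echar[OF uV aV] uV u(2) Psym by simp
    qed
    thus ?thesis unfolding gdeg_def G by simp
  qed
  have degB: "gdeg G b = card {a\<in>A. P a b}" if b: "b \<in> B" for b
  proof -
    have "{u \<in> V. {u, b} \<in> E} = {a\<in>A. P a b}"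
    proof (intro equalityI subsetI)
      fix u assume "u \<in> {u \<in> V. {u, b} \<in> E}"
      hence u: "u \<in> V" "{u, b} \<in> E" by auto
      have bV: "b \<in> V" using b part by blast
      have "u \<noteq> b" "P u b" using Echar[OF u(1) bV] u(2) by auto
      moreover have "u \<in> A" using Pbip[OF u(1) bV \<open>u \<noteq> b\<close> \<open>P u b\<close>] b part(2) by blast
      ultimately show "u \<in> {a\<in>A. P a b}" by simp
    next
      fix u assume "u \<in> {a\<in>A. P a b}"
      hence u: "u \<in> A" "P u b" by auto
      have uV: "u \<in> V" and bV: "b \<in> V" using u b part by blast+
      have "u \<noteq> b" using u b part(2) by blast
      thus "u \<in> {u \<in> V. {u, b} \<in> E}" using Echar[OF uV bV] uV u(2) by simp
    qed
    thus ?thesis unfolding gdeg_def G by simp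
  qed
  define \<eta> where "\<eta> = \<epsilon> / (1 - \<epsilon>)"
  have cardB: "card B \<ge> 1" using Bn finB by (simp add: Suc_le_eq card_gt_0_iff)
  have cardA: "card A \<ge> 1" using An finA by (simp add: Suc_le_eq card_gt_0_iff)
  have key: "real (card {y\<in>Y. \<not> Q y}) \<le> \<epsilon> * real (card Y) \<Longrightarrow> finite Y \<Longrightarrow> card Y \<ge> 1 \<Longrightarrow>
     real (card {y\<in>Y. Q y}) > 0 \<and> real (card {y\<in>Y. \<not> Q y}) \<le> \<eta> * real (card {y\<in>Y. Q y})"
    for Y :: "nat set" and Q
  proof -
    assume h: "real (card {y\<in>Y. \<not> Q y}) \<le> \<epsilon> * real (card Y)" and fY: "finite Y" and cY: "card Y \<ge> 1"
    have sp: "real (card Y) = real (card {y\<in>Y. Q y}) + real (card {y\<in>Y. \<not> Q y})"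
      using card_split_filter[OF fY, of Q] by simp
    have "real (card {y\<in>Y. Q y}) \<ge> (1 - \<epsilon>) * real (card Y)" using sp h by (simp add: algebra_simps)
    moreover have "(1 - \<epsilon>) * real (card Y) > 0" using \<epsilon>(2) cY by simp
    moreover have "\<epsilon> * real (card Y) = \<eta> * ((1 - \<epsilon>) * real (card Y))" unfolding \<eta>_def using \<epsilon>(2) by simp
    moreover have "\<eta> \<ge> 0" unfolding \<eta>_def using \<epsilon> by simp
    ultimately show ?thesis using h by (smt (verit) mult_left_mono)
  qed
  have missA': "real (card {b\<in>B. {a, b} \<notin> snd G}) \<le> \<eta> * real (gdeg G a)"
    and dA: "gdeg G a > 0" if a: "a \<in> A" for a
  proof -
    have eq: "{b\<in>B. {a, b} \<notin> snd G} = {b\<in>B. \<not> P a b}"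
    proof -
      have "{a, b} \<in> E \<longleftrightarrow> P a b" if "b \<in> B" for b
        using Echar[of a b] a that part by blast
      thus ?thesis using G by auto
    qed
    have "real (card {b\<in>B. \<not> P a b}) \<le> \<epsilon> * real (card B)" using missA[OF a] unfolding P_def .
    from key[OF this finB cardB] degA[OF a] eq
    show "real (card {b\<in>B. {a, b} \<notin> snd G}) \<le> \<eta> * real (gdeg G a)" "gdeg G a > 0" by simp_all
  qed
  have missB': "real (card {a\<in>A. {a, b} \<notin> snd G}) \<le> \<eta> * real (gdeg G b)"
    and dB: "gdeg G b > 0" if b: "b \<in> B" for b
  proof -
    have eq: "{a\<in>A. {a, b} \<notin> snd G} = {a\<in>A. \<not> P a b}"
    proof -
      have "{a, b} \<in> E \<longleftrightarrow> P a b" if "a \<in> A" for a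
        using Echar[of a b] b that part by blast
      thus ?thesis using G by auto
    qed
    have "real (card {a\<in>A. \<not> P a b}) \<le> \<epsilon> * real (card A)" using missB[OF b] unfolding P_def .
    from key[OF this finA cardA] degB[OF b] eq
    show "real (card {a\<in>A. {a, b} \<notin> snd G}) \<le> \<eta> * real (gdeg G b)" "gdeg G b > 0" by simp_all
  qed
  have dpos: "gdeg G v > 0" if "v \<in> fst G" for v using that G part dA dB by blast
  have "card (fst G) \<ge> 2 \<and> no_isolated G \<and> spectral_gap G > 1 - \<delta>"
    by (rule spec_gap_generic[of G A B \<eta> \<delta>])
       (use finV G part An Bn Ebip dpos missA' missB' \<epsilon> in \<open>auto simp: \<eta>_def\<close>)
  thus ?thesis unfolding G_def .
qed


lemma prod_if_pow: "finite S \<Longrightarrow> (\<Prod>x\<in>S. if P x then w else 1) = w ^ card {x\<in>S. P x}"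
  by (subst prod.inter_filter[symmetric]) simp_all

lemma pmf_integrable_bounded:
  fixes f :: "'a \<Rightarrow> real"
  assumes "\<And>x. \<bar>f x\<bar> \<le> B"
  shows "integrable (measure_pmf p) f"
  by (rule measure_pmf.integrable_const_bound[where B = B]) (use assms in auto)

lemma exp_moment:
  fixes I S :: "'a set" and p :: "'a \<Rightarrow> 'b pmf" and Ev :: "'a \<Rightarrow> 'b \<Rightarrow> bool" and w :: real
  assumes fin: "finite I" and SI: "S \<subseteq> I" and w: "w \<ge> 0"
  shows "measure_pmf.expectation (Pi_pmf I dflt p) (\<lambda>y. w ^ card {x\<in>S. Ev x (y x)})
       = (\<Prod>x\<in>S. 1 + (w - 1) * measure_pmf.prob (p x) {v. Ev x v})"
proof -
  define f where "f x v = (if x \<in> S \<and> Ev x v then w else 1)" for x v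
  have finS: "finite S" using fin SI finite_subset by blast
  have eq1: "w ^ card {x\<in>S. Ev x (y x)} = (\<Prod>x\<in>I. f x (y x))" for y
  proof -
    have "(\<Prod>x\<in>I. f x (y x)) = (\<Prod>x\<in>S. f x (y x))"
      by (rule prod.mono_neutral_right[OF fin SI]) (auto simp: f_def)
    also have "\<dots> = (\<Prod>x\<in>S. if Ev x (y x) then w else 1)" by (rule prod.cong) (auto simp: f_def)
    also have "\<dots> = w ^ card {x\<in>S. Ev x (y x)}" by (rule prod_if_pow[OF finS])
    finally show ?thesis by simp
  qed
  have fb: "\<bar>f x v\<bar> \<le> max w 1" for x v unfolding f_def using w by auto
  have "measure_pmf.expectation (Pi_pmf I dflt p) (\<lambda>y. w ^ card {x\<in>S. Ev x (y x)})
      = measure_pmf.expectation (Pi_pmf I dflt p) (\<lambda>y. \<Prod>x\<in>I. f x (y x))"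
    by (simp add: eq1)
  also have "\<dots> = (\<Prod>x\<in>I. measure_pmf.expectation (p x) (f x))"
  proof (rule expectation_prod_Pi_pmf[OF fin])
    show "integrable (measure_pmf (p x)) (f x)" for x
      by (rule pmf_integrable_bounded[where B = "max w 1"]) (rule fb)
    show "0 \<le> f x y" for x y using w by (simp add: f_def)
  qed
  also have "\<dots> = (\<Prod>x\<in>S. measure_pmf.expectation (p x) (f x))"
  proof (rule prod.mono_neutral_right[OF fin SI], intro ballI)
    fix i assume "i \<in> I - S"
    hence "f i = (\<lambda>_. 1)" by (auto simp: f_def)
    thus "measure_pmf.expectation (p i) (f i) = 1" by (simp add: measure_pmf.prob_space)
  qed
  also have "\<dots> = (\<Prod>x\<in>S. 1 + (w - 1) * measure_pmf.prob (p x) {v. Ev x v})"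
  proof (rule prod.cong[OF refl])
    fix x assume x: "x \<in> S"
    have "f x = (\<lambda>v. 1 + (w - 1) * indicator {v. Ev x v} v)"
      using x by (auto simp: f_def fun_eq_iff indicator_def)
    moreover have "measure_pmf.expectation (p x) (\<lambda>v. 1 + (w - 1) * indicator {v. Ev x v} v)
        = 1 + (w - 1) * measure_pmf.prob (p x) {v. Ev x v}"
    proof -
      have i1: "integrable (measure_pmf (p x)) (\<lambda>v. 1::real)"
        by (rule pmf_integrable_bounded[where B = 1]) simp
      have i2: "integrable (measure_pmf (p x)) (\<lambda>v. (w - 1) * indicator {v. Ev x v} v)"
        by (rule pmf_integrable_bounded[where B = "\<bar>w - 1\<bar>"]) (simp add: indicator_def abs_mult)
      have "measure_pmf.expectation (p x) (\<lambda>v. 1 + (w - 1) * indicator {v. Ev x v} v)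
          = measure_pmf.expectation (p x) (\<lambda>v. 1) + measure_pmf.expectation (p x) (\<lambda>v. (w - 1) * indicator {v. Ev x v} v)"
        by (rule Bochner_Integration.integral_add[OF i1 i2])
      also have "\<dots> = 1 + (w - 1) * measure_pmf.prob (p x) {v. Ev x v}"
        by (simp add: measure_pmf.prob_space)
      finally show ?thesis .
    qed
    ultimately show "measure_pmf.expectation (p x) (f x) = 1 + (w - 1) * measure_pmf.prob (p x) {v. Ev x v}"
      by simp
  qed
  finally show ?thesis .
qed

lemma chernoff_upper:
  fixes I S :: "'a set" and p :: "'a \<Rightarrow> 'b pmf" and Ev :: "'a \<Rightarrow> 'b \<Rightarrow> bool" and r t :: real
  assumes fin: "finite I" and SI: "S \<subseteq> I"
    and pr: "\<And>x. x \<in> S \<Longrightarrow> measure_pmf.prob (p x) {v. Ev x v} \<le> r"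
  shows "measure_pmf.prob (Pi_pmf I dflt p) {y. t \<le> real (card {x\<in>S. Ev x (y x)})}
       \<le> exp (- t + (exp 1 - 1) * r * real (card S))"
proof -
  define K where "K y = real (card {x\<in>S. Ev x (y x)})" for y
  define M where "M = Pi_pmf I dflt p"
  have finS: "finite S" using fin SI finite_subset by blast
  have Kb: "0 \<le> K y" "K y \<le> real (card S)" for y
    unfolding K_def using finS by (auto intro!: card_mono)
  have "measure_pmf.prob M {y. t \<le> K y} = measure_pmf.expectation M (indicator {y. t \<le> K y})"
    by simp
  also have "\<dots> \<le> measure_pmf.expectation M (\<lambda>y. exp (- t) * exp 1 ^ card {x\<in>S. Ev x (y x)})"
  proof (rule integral_mono)
    show "integrable (measure_pmf M) (indicator {y. t \<le> K y} :: _ \<Rightarrow> real)"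
      by (rule pmf_integrable_bounded[where B = 1]) (simp add: indicator_def)
    show "integrable (measure_pmf M) (\<lambda>y. exp (- t) * exp 1 ^ card {x\<in>S. Ev x (y x)})"
    proof (rule pmf_integrable_bounded[where B = "exp (- t) * exp 1 ^ card S"])
      fix y
      have "(exp 1 :: real) ^ card {x\<in>S. Ev x (y x)} \<le> exp 1 ^ card S"
      proof -
        have cm: "card {x\<in>S. Ev x (y x)} \<le> card S" by (rule card_mono[OF finS]) auto
        show ?thesis using cm by (intro power_increasing) auto
      qed
      thus "\<bar>exp (- t) * exp 1 ^ card {x\<in>S. Ev x (y x)}\<bar> \<le> exp (- t) * exp 1 ^ card S" by simp
    qed
    fix y
    have "exp (- t) * exp 1 ^ card {x\<in>S. Ev x (y x)} = exp (K y - t)"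
      unfolding K_def by (simp add: exp_of_nat_mult[symmetric] exp_diff exp_minus field_simps)
    moreover have "indicator {y. t \<le> K y} y \<le> exp (K y - t)"
      by (auto simp: indicator_def)
    ultimately show "indicator {y. t \<le> K y} y \<le> exp (- t) * exp 1 ^ card {x\<in>S. Ev x (y x)}" by simp
  qed
  also have "\<dots> = exp (- t) * measure_pmf.expectation M (\<lambda>y. exp 1 ^ card {x\<in>S. Ev x (y x)})"
    by simp
  also have "measure_pmf.expectation M (\<lambda>y. exp 1 ^ card {x\<in>S. Ev x (y x)})
      = (\<Prod>x\<in>S. 1 + (exp 1 - 1) * measure_pmf.prob (p x) {v. Ev x v})"
    unfolding M_def by (rule exp_moment[OF fin SI]) simp
  also have "\<dots> \<le> (\<Prod>x\<in>S. exp ((exp 1 - 1) * r))"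
  proof (rule prod_mono)
    fix x assume x: "x \<in> S"
    have e1: "exp 1 - 1 \<ge> (0::real)" by simp
    have "1 + (exp 1 - 1) * measure_pmf.prob (p x) {v. Ev x v} \<le> 1 + (exp 1 - 1) * r"
      using pr[OF x] e1 by (simp add: mult_left_mono)
    also have "\<dots> \<le> exp ((exp 1 - 1) * r)" by (rule exp_ge_add_one_self)
    finally show "0 \<le> 1 + (exp 1 - 1) * measure_pmf.prob (p x) {v. Ev x v} \<and>
        1 + (exp 1 - 1) * measure_pmf.prob (p x) {v. Ev x v} \<le> exp ((exp 1 - 1) * r)"
      using e1 by simp
  qed
  also have "(\<Prod>x\<in>S. exp ((exp 1 - 1) * r)) = exp ((exp 1 - 1) * r * real (card S))"
    by (simp add: exp_of_nat_mult[symmetric] mult.commute)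
  finally have "measure_pmf.prob M {y. t \<le> K y} \<le> exp (- t) * exp ((exp 1 - 1) * r * real (card S))"
    by simp
  thus ?thesis unfolding M_def K_def by (simp add: exp_add[symmetric])
qed

lemma chernoff_lower:
  fixes I S :: "'a set" and p :: "'a \<Rightarrow> 'b pmf" and Ev :: "'a \<Rightarrow> 'b \<Rightarrow> bool" and r t :: real
  assumes fin: "finite I" and SI: "S \<subseteq> I"
    and pr: "\<And>x. x \<in> S \<Longrightarrow> measure_pmf.prob (p x) {v. Ev x v} \<ge> r"
  shows "measure_pmf.prob (Pi_pmf I dflt p) {y. real (card {x\<in>S. Ev x (y x)}) \<le> t}
       \<le> exp (t - (1 - exp (- 1)) * r * real (card S))"
proof -
  define K where "K y = real (card {x\<in>S. Ev x (y x)})" for y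
  define M where "M = Pi_pmf I dflt p"
  define q where "q = exp (- 1 :: real)"
  have q: "0 < q" "q \<le> 1" unfolding q_def by auto
  have finS: "finite S" using fin SI finite_subset by blast
  have "measure_pmf.prob M {y. K y \<le> t} = measure_pmf.expectation M (indicator {y. K y \<le> t})"
    by simp
  also have "\<dots> \<le> measure_pmf.expectation M (\<lambda>y. exp t * q ^ card {x\<in>S. Ev x (y x)})"
  proof (rule integral_mono)
    show "integrable (measure_pmf M) (indicator {y. K y \<le> t} :: _ \<Rightarrow> real)"
      by (rule pmf_integrable_bounded[where B = 1]) (simp add: indicator_def)
    show "integrable (measure_pmf M) (\<lambda>y. exp t * q ^ card {x\<in>S. Ev x (y x)})"
    proof (rule pmf_integrable_bounded[where B = "exp t"])
      fix y
      have "q ^ card {x\<in>S. Ev x (y x)} \<le> 1" using q by (simp add: power_le_one)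
      thus "\<bar>exp t * q ^ card {x\<in>S. Ev x (y x)}\<bar> \<le> exp t" using q by (simp add: mult_left_le)
    qed
    fix y
    have "exp t * q ^ card {x\<in>S. Ev x (y x)} = exp (t - K y)"
      unfolding K_def q_def by (simp add: exp_of_nat_mult[symmetric] exp_diff exp_minus field_simps)
    moreover have "indicator {y. K y \<le> t} y \<le> exp (t - K y)"
      by (auto simp: indicator_def)
    ultimately show "indicator {y. K y \<le> t} y \<le> exp t * q ^ card {x\<in>S. Ev x (y x)}" by simp
  qed
  also have "\<dots> = exp t * measure_pmf.expectation M (\<lambda>y. q ^ card {x\<in>S. Ev x (y x)})"
    by simp
  also have "measure_pmf.expectation M (\<lambda>y. q ^ card {x\<in>S. Ev x (y x)})
      = (\<Prod>x\<in>S. 1 + (q - 1) * measure_pmf.prob (p x) {v. Ev x v})"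
    unfolding M_def by (rule exp_moment[OF fin SI]) (use q in simp)
  also have "\<dots> \<le> (\<Prod>x\<in>S. exp (- (1 - q) * r))"
  proof (rule prod_mono)
    fix x assume x: "x \<in> S"
    define P where "P = measure_pmf.prob (p x) {v. Ev x v}"
    have P1: "P \<le> 1" "P \<ge> 0" unfolding P_def by auto
    have "(1 - q) * P \<le> 1 * 1" by (rule mult_mono) (use q P1 in auto)
    hence "0 \<le> 1 + (q - 1) * P" by (auto simp: algebra_simps)
    moreover have "1 + (q - 1) * P \<le> 1 + (q - 1) * r"
      using pr[OF x] q unfolding P_def[symmetric] by (simp add: mult_left_mono_neg)
    moreover have "1 + (q - 1) * r \<le> exp (- (1 - q) * r)" using exp_ge_add_one_self[of "(q - 1) * r"]
      by simp
    ultimately have "0 \<le> 1 + (q - 1) * P \<and> 1 + (q - 1) * P \<le> exp (- (1 - q) * r)"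
      by linarith
    thus "0 \<le> 1 + (q - 1) * measure_pmf.prob (p x) {v. Ev x v} \<and>
        1 + (q - 1) * measure_pmf.prob (p x) {v. Ev x v} \<le> exp (- (1 - q) * r)"
      unfolding P_def .
  qed
  also have "(\<Prod>x\<in>S. exp (- (1 - q) * r)) = exp (- (1 - q) * r * real (card S))"
    by (simp add: exp_of_nat_mult[symmetric] mult.commute)
  finally have "measure_pmf.prob M {y. K y \<le> t} \<le> exp t * exp (- (1 - q) * r * real (card S))"
    by simp
  also have "exp t * exp (- (1 - q) * r * real (card S)) = exp (t + (- (1 - q) * r * real (card S)))"
    by (rule exp_add[symmetric])
  also have "t + (- (1 - q) * r * real (card S)) = t - (1 - q) * r * real (card S)" by (simp add: algebra_simps)
  finally show ?thesis unfolding M_def K_def q_def .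
qed


lemma bind_bad_bound:
  fixes P :: "'a pmf" and Q :: "'a \<Rightarrow> 'b pmf" and X :: "'b set" and LG :: "'a set"
  assumes good: "\<And>a. a \<in> LG \<Longrightarrow> measure_pmf.prob (Q a) X \<le> \<eta>" and eta: "\<eta> \<ge> 0"
  shows "measure_pmf.prob (bind_pmf P Q) X \<le> measure_pmf.prob P (- LG) + \<eta>"
proof -
  have "emeasure (measure_pmf (bind_pmf P Q)) X = (\<integral>\<^sup>+a. emeasure (measure_pmf (Q a)) X \<partial>measure_pmf P)"
    by simp
  also have "\<dots> \<le> (\<integral>\<^sup>+a. (indicator (- LG) a + ennreal \<eta>) \<partial>measure_pmf P)"
  proof (rule nn_integral_mono)
    fix a
    show "emeasure (measure_pmf (Q a)) X \<le> indicator (- LG) a + ennreal \<eta>"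
    proof (cases "a \<in> LG")
      case True
      have "emeasure (measure_pmf (Q a)) X = ennreal (measure_pmf.prob (Q a) X)"
        by (simp add: measure_pmf.emeasure_eq_measure)
      also have "\<dots> \<le> ennreal \<eta>" using good[OF True] by (simp add: ennreal_leI)
      finally show ?thesis using True by simp
    next
      case False
      have "emeasure (measure_pmf (Q a)) X \<le> 1" by (simp add: measure_pmf.measure_le_1 measure_pmf.emeasure_eq_measure)
      thus ?thesis using False by (simp add: add_increasing2)
    qed
  qed
  also have "\<dots> = emeasure (measure_pmf P) (- LG) + ennreal \<eta>"
    by (subst nn_integral_add) (auto simp: measure_pmf.emeasure_space_1)
  also have "\<dots> = ennreal (measure_pmf.prob P (- LG) + \<eta>)"
    using eta by (simp only: measure_pmf.emeasure_eq_measure ennreal_plus measure_nonneg)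
  finally have h: "ennreal (measure_pmf.prob (bind_pmf P Q) X) \<le> ennreal (measure_pmf.prob P (- LG) + \<eta>)"
    by (simp only: measure_pmf.emeasure_eq_measure)
  have "0 \<le> measure_pmf.prob P (- LG) + \<eta>" using eta by simp
  thus ?thesis using h ennreal_le_iff by blast
qed

lemma side_pmf_probs:
  assumes "0 \<le> pA" "pA < 1" "0 \<le> pB" "pA + pB \<le> 1"
  shows "measure_pmf.prob (side_pmf pA pB) {v. v = SideA} = pA"
    "measure_pmf.prob (side_pmf pA pB) {v. v = SideB} = pB"
proof -
  define r where "r = pB / (1 - pA)"
  have r: "0 \<le> r" "r \<le> 1" "(1 - pA) * r = pB" using assms unfolding r_def by auto
  define g where "g = bind_pmf (bernoulli_pmf r) (\<lambda>b. return_pmf (if b then SideB else Out))"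
  define f where "f = (\<lambda>a. if a then return_pmf SideA else g)"
  have sp: "side_pmf pA pB = bind_pmf (bernoulli_pmf pA) f"
    unfolding side_pmf_def f_def g_def r_def by simp
  have pA01: "0 \<le> pA" "pA \<le> 1" using assms by auto
  have "SideA \<notin> set_pmf g" unfolding g_def by (auto split: if_splits)
  hence gA: "pmf g SideA = 0" by (simp add: set_pmf_iff)
  have gB: "pmf g SideB = r" unfolding g_def pmf_bind using r
    by (subst integral_bernoulli_pmf) auto
  have "measure_pmf.prob (side_pmf pA pB) {v. v = SideA} = pmf (side_pmf pA pB) SideA"
    by (simp add: measure_pmf_single[symmetric])
  also have "\<dots> = pmf (f True) SideA * pA + pmf (f False) SideA * (1 - pA)"
    unfolding sp pmf_bind by (rule integral_bernoulli_pmf[OF pA01])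
  also have "\<dots> = pA" unfolding f_def using gA by simp
  finally show "measure_pmf.prob (side_pmf pA pB) {v. v = SideA} = pA" .
  have "measure_pmf.prob (side_pmf pA pB) {v. v = SideB} = pmf (side_pmf pA pB) SideB"
    by (simp add: measure_pmf_single[symmetric])
  also have "\<dots> = pmf (f True) SideB * pA + pmf (f False) SideB * (1 - pA)"
    unfolding sp pmf_bind by (rule integral_bernoulli_pmf[OF pA01])
  also have "\<dots> = pB" unfolding f_def using gB r by (simp add: mult.commute)
  finally show "measure_pmf.prob (side_pmf pA pB) {v. v = SideB} = pB" .
qed

lemma H_graph_eq:
  "H_graph N pA pB peA peB peAB =
     bind_pmf (Pi_pmf {..<N} Out (\<lambda>_. side_pmf pA pB))
       (\<lambda>lab. map_pmf (mkG N lab) (Pi_pmf (pairs_below N) False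
                 (\<lambda>ij. bernoulli_pmf (edge_prob lab peA peB peAB ij))))"
  unfolding H_graph_def mkG_def Let_def map_pmf_def by simp

lemma finite_pairs_below: "finite (pairs_below N)"
proof -
  have "pairs_below N \<subseteq> {..<N} \<times> {..<N}" unfolding pairs_below_def by auto
  thus ?thesis by (rule finite_subset) simp
qed

lemma support_edges:
  assumes c: "c \<in> set_pmf (Pi_pmf (pairs_below N) False (\<lambda>ij. bernoulli_pmf (edge_prob lab 0 0 q ij)))"
    and ij: "(i, j) \<in> pairs_below N" and cij: "c (i, j)"
  shows "(lab i = SideA \<and> lab j = SideB) \<or> (lab i = SideB \<and> lab j = SideA)"
proof (rule ccontr)
  assume neg: "\<not> ?thesis"
  have "edge_prob lab 0 0 q (i, j) = 0" using neg unfolding edge_prob_def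
    by (auto split: side.splits)
  moreover have "c (i, j) \<in> set_pmf (bernoulli_pmf (edge_prob lab 0 0 q (i, j)))"
    using c ij unfolding set_Pi_pmf[OF finite_pairs_below] PiE_dflt_def by auto
  ultimately have "True \<in> set_pmf (bernoulli_pmf 0)" using cij by simp
  thus False by (simp add: set_pmf_iff)
qed


lemma vertex_miss_bound:
  fixes N :: nat and lab :: "nat \<Rightarrow> side" and q t :: real and Y :: "nat set" and v :: nat
  assumes Y: "Y \<subseteq> {..<N}" and v: "v < N" "v \<notin> Y"
    and ep: "\<And>y. y \<in> Y \<Longrightarrow> edge_prob lab 0 0 q (min v y, max v y) = q" and q: "0 \<le> q" "q \<le> 1"
  shows "measure_pmf.prob (Pi_pmf (pairs_below N) False (\<lambda>ij. bernoulli_pmf (edge_prob lab 0 0 q ij)))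
           {c. t \<le> real (card {y\<in>Y. \<not> c (min v y, max v y)})}
         \<le> exp (- t + (exp 1 - 1) * (1 - q) * real (card Y))"
proof -
  define \<pi> where "\<pi> y = (min v y, max v y)" for y
  define S where "S = \<pi> ` Y"
  have inj: "inj_on \<pi> Y"
  proof (rule inj_onI)
    fix x y assume "x \<in> Y" "y \<in> Y" "\<pi> x = \<pi> y"
    hence "min v x + max v x = min v y + max v y" unfolding \<pi>_def by simp
    thus "x = y" by (simp add: min_def max_def split: if_splits)
  qed
  have SI: "S \<subseteq> pairs_below N"
  proof
    fix e assume "e \<in> S"
    then obtain y where y: "y \<in> Y" "e = \<pi> y" unfolding S_def by blast
    have "y \<noteq> v" "y < N" using y(1) v Y by auto
    thus "e \<in> pairs_below N" unfolding y(2) \<pi>_def pairs_below_def using v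
      by (auto simp: min_def max_def)
  qed
  have cardS: "card S = card Y" unfolding S_def using inj by (rule card_image)
  have cnt: "card {y\<in>Y. \<not> c (\<pi> y)} = card {e\<in>S. \<not> c e}" for c
  proof -
    have "{e\<in>S. \<not> c e} = \<pi> ` {y\<in>Y. \<not> c (\<pi> y)}" unfolding S_def by auto
    moreover have "inj_on \<pi> {y\<in>Y. \<not> c (\<pi> y)}" using inj by (rule inj_on_subset) auto
    ultimately show ?thesis by (simp add: card_image)
  qed
  have pr: "measure_pmf.prob (bernoulli_pmf (edge_prob lab 0 0 q e)) {b. \<not> b} \<le> 1 - q" if eS: "e \<in> S" for e
  proof -
    obtain y where y: "y \<in> Y" "e = \<pi> y" using eS unfolding S_def by blast
    have "edge_prob lab 0 0 q e = q" using ep[OF y(1)] y(2) unfolding \<pi>_def by simp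
    moreover have "{b. \<not> b} = {False}" by auto
    ultimately show ?thesis using q by (simp add: measure_pmf_single)
  qed
  have "measure_pmf.prob (Pi_pmf (pairs_below N) False (\<lambda>ij. bernoulli_pmf (edge_prob lab 0 0 q ij)))
           {c. t \<le> real (card {e\<in>S. \<not> c e})}
         \<le> exp (- t + (exp 1 - 1) * (1 - q) * real (card S))"
    by (rule chernoff_upper[OF finite_pairs_below SI, where Ev = "\<lambda>e b. \<not> b"]) (use pr in simp)
  moreover have "{c. t \<le> real (card {y\<in>Y. \<not> c (min v y, max v y)})} = {c. t \<le> real (card {e\<in>S. \<not> c e})}"
    using cnt unfolding \<pi>_def by simp
  ultimately show ?thesis using cardS by simp
qed


lemma exp_neg1_le: "exp (- 1 :: real) \<le> 1 / 2"
proof -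
  have "(2::real) \<le> exp 1" using exp_ge_add_one_self[of "1::real"] by simp
  thus ?thesis by (simp add: exp_minus field_simps)
qed

lemma fixed_n_bound:
  fixes N :: nat and pA pB q \<epsilon> \<delta> p0 :: real
  assumes pA: "0 \<le> pA" "pA < 1" and pB: "0 \<le> pB" "pA + pB \<le> 1"
    and p0: "0 < p0" "p0 \<le> pA" "p0 \<le> pB"
    and q: "0 \<le> q" "q \<le> 1" "(exp 1 - 1) * (1 - q) \<le> \<epsilon> / 2"
    and \<epsilon>: "0 < \<epsilon>" "\<epsilon> < 1" "\<epsilon> / (1 - \<epsilon>) < \<delta>"
  shows "measure_pmf.prob (H_graph N pA pB 0 0 q)
           {G. card (fst G) \<ge> 2 \<and> no_isolated G \<and> spectral_gap G > 1 - \<delta>}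
         \<ge> 1 - (2 * exp (- real N * p0 / 4) + real N * exp (- \<epsilon> * real N * p0 / 8))"
proof -
  define Plab where "Plab = Pi_pmf {..<N} Out (\<lambda>_. side_pmf pA pB)"
  define Pc where "Pc lab = Pi_pmf (pairs_below N) False (\<lambda>ij. bernoulli_pmf (edge_prob lab 0 0 q ij))"
    for lab
  define As where "As lab = {i. i < N \<and> lab i = SideA}" for lab :: "nat \<Rightarrow> side"
  define Bs where "Bs lab = {i. i < N \<and> lab i = SideB}" for lab :: "nat \<Rightarrow> side"
  define m0 where "m0 = real N * p0 / 4"
  define LG where "LG = {lab. m0 < real (card (As lab)) \<and> m0 < real (card (Bs lab))}"
  define Good where "Good = {G. card (fst G) \<ge> 2 \<and> no_isolated G \<and> spectral_gap G > 1 - \<delta>}"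
  define \<eta> where "\<eta> = real N * exp (- \<epsilon> * m0 / 2)"
  have m0: "m0 \<ge> 0" unfolding m0_def using p0 by simp
  have H: "H_graph N pA pB 0 0 q = bind_pmf Plab (\<lambda>lab. map_pmf (mkG N lab) (Pc lab))"
    unfolding Plab_def Pc_def by (rule H_graph_eq)
  have edge_part: "measure_pmf.prob (map_pmf (mkG N lab) (Pc lab)) (- Good) \<le> \<eta>" if lab: "lab \<in> LG" for lab
  proof -
    define A where "A = As lab"
    define B where "B = Bs lab"
    have cA: "m0 < real (card A)" and cB: "m0 < real (card B)" using lab unfolding LG_def A_def B_def by auto
    have An: "A \<noteq> {}" and Bn: "B \<noteq> {}" using cA cB m0 by auto
    have finA: "finite A" and finB: "finite B" unfolding A_def B_def As_def Bs_def by auto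
    have AB: "A \<inter> B = {}" unfolding A_def B_def As_def Bs_def by auto
    have ABN: "A \<subseteq> {..<N}" "B \<subseteq> {..<N}" unfolding A_def B_def As_def Bs_def by auto
    define Ea where "Ea a = {c. \<epsilon> * real (card B) \<le> real (card {b\<in>B. \<not> c (min a b, max a b)})}" for a
    define Eb where "Eb b = {c. \<epsilon> * real (card A) \<le> real (card {a\<in>A. \<not> c (min b a, max b a)})}" for b
    define EB where "EB = (\<Union>a\<in>A. Ea a) \<union> (\<Union>b\<in>B. Eb b)"
    have sub: "mkG N lab -` (- Good) \<inter> set_pmf (Pc lab) \<subseteq> EB"
    proof
      fix c assume c: "c \<in> mkG N lab -` (- Good) \<inter> set_pmf (Pc lab)"
      show "c \<in> EB"
      proof (rule ccontr)
        assume nEB: "c \<notin> EB"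
        have "card (fst (mkG N lab c)) \<ge> 2 \<and> no_isolated (mkG N lab c) \<and> spectral_gap (mkG N lab c) > 1 - \<delta>"
        proof (rule mkG_good[where \<epsilon> = \<epsilon>])
          show "(lab i = SideA \<and> lab j = SideB) \<or> (lab i = SideB \<and> lab j = SideA)"
            if "(i, j) \<in> pairs_below N" "c (i, j)" for i j
            using support_edges[of c N lab q i j] c that unfolding Pc_def by blast
          show "{i. i < N \<and> lab i = SideA} \<noteq> {}" using An unfolding A_def As_def .
          show "{i. i < N \<and> lab i = SideB} \<noteq> {}" using Bn unfolding B_def Bs_def .
          show "real (card {b \<in> {i. i < N \<and> lab i = SideB}. \<not> c (min a b, max a b)})
              \<le> \<epsilon> * real (card {i. i < N \<and> lab i = SideB})"
            if "a \<in> {i. i < N \<and> lab i = SideA}" for a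
          proof -
            have "a \<in> A" using that unfolding A_def As_def .
            hence "c \<notin> Ea a" using nEB unfolding EB_def by blast
            thus ?thesis unfolding Ea_def B_def Bs_def by simp
          qed
          show "real (card {a \<in> {i. i < N \<and> lab i = SideA}. \<not> c (min a b, max a b)})
              \<le> \<epsilon> * real (card {i. i < N \<and> lab i = SideA})"
            if "b \<in> {i. i < N \<and> lab i = SideB}" for b
          proof -
            have "b \<in> B" using that unfolding B_def Bs_def .
            hence "c \<notin> Eb b" using nEB unfolding EB_def by blast
            thus ?thesis unfolding Eb_def A_def As_def by (simp add: min.commute max.commute)
          qed
        qed (use \<epsilon> in auto)
        thus False using c unfolding Good_def by auto
      qed
    qed
    have pEa: "measure_pmf.prob (Pc lab) (Ea a) \<le> exp (- \<epsilon> * m0 / 2)" if a: "a \<in> A" for a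
    proof -
      have "measure_pmf.prob (Pc lab) (Ea a) \<le> exp (- (\<epsilon> * real (card B)) + (exp 1 - 1) * (1 - q) * real (card B))"
        unfolding Ea_def Pc_def
      proof (rule vertex_miss_bound[OF ABN(2)])
        show "a < N" "a \<notin> B" using a AB ABN by auto
        show "edge_prob lab 0 0 q (min a y, max a y) = q" if "y \<in> B" for y
          using a that unfolding A_def B_def As_def Bs_def edge_prob_def
          by (cases "a \<le> y") (auto simp: min_def max_def)
      qed (use q in auto)
      also have "\<dots> \<le> exp (- \<epsilon> * m0 / 2)"
      proof -
        have "(exp 1 - 1) * (1 - q) * real (card B) \<le> \<epsilon> / 2 * real (card B)"
          using q(3) by (rule mult_right_mono) simp
        moreover have "\<epsilon> * m0 \<le> \<epsilon> * real (card B)" using cB \<epsilon>(1) by simp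
        ultimately show ?thesis by (subst exp_le_cancel_iff) linarith
      qed
      finally show ?thesis .
    qed
    have pEb: "measure_pmf.prob (Pc lab) (Eb b) \<le> exp (- \<epsilon> * m0 / 2)" if b: "b \<in> B" for b
    proof -
      have "measure_pmf.prob (Pc lab) (Eb b) \<le> exp (- (\<epsilon> * real (card A)) + (exp 1 - 1) * (1 - q) * real (card A))"
        unfolding Eb_def Pc_def
      proof (rule vertex_miss_bound[OF ABN(1)])
        show "b < N" "b \<notin> A" using b AB ABN by auto
        show "edge_prob lab 0 0 q (min b y, max b y) = q" if "y \<in> A" for y
          using b that unfolding A_def B_def As_def Bs_def edge_prob_def
          by (cases "b \<le> y") (auto simp: min_def max_def)
      qed (use q in auto)
      also have "\<dots> \<le> exp (- \<epsilon> * m0 / 2)"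
      proof -
        have "(exp 1 - 1) * (1 - q) * real (card A) \<le> \<epsilon> / 2 * real (card A)"
          using q(3) by (rule mult_right_mono) simp
        moreover have "\<epsilon> * m0 \<le> \<epsilon> * real (card A)" using cA \<epsilon>(1) by simp
        ultimately show ?thesis by (subst exp_le_cancel_iff) linarith
      qed
      finally show ?thesis .
    qed
    have "measure_pmf.prob (map_pmf (mkG N lab) (Pc lab)) (- Good)
        = measure_pmf.prob (Pc lab) (mkG N lab -` (- Good))" by simp
    also have "\<dots> = measure_pmf.prob (Pc lab) (mkG N lab -` (- Good) \<inter> set_pmf (Pc lab))"
      by (simp add: measure_Int_set_pmf)
    also have "\<dots> \<le> measure_pmf.prob (Pc lab) EB"
      using sub by (intro measure_pmf.finite_measure_mono) auto
    also have "\<dots> \<le> measure_pmf.prob (Pc lab) (\<Union>a\<in>A. Ea a) + measure_pmf.prob (Pc lab) (\<Union>b\<in>B. Eb b)"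
      unfolding EB_def by (rule measure_Un_le) auto
    also have "measure_pmf.prob (Pc lab) (\<Union>a\<in>A. Ea a) \<le> (\<Sum>a\<in>A. measure_pmf.prob (Pc lab) (Ea a))"
      using finA by (intro measure_pmf.finite_measure_subadditive_finite) auto
    also have "\<dots> \<le> (\<Sum>a\<in>A. exp (- \<epsilon> * m0 / 2))" using pEa by (intro sum_mono) auto
    also have "measure_pmf.prob (Pc lab) (\<Union>b\<in>B. Eb b) \<le> (\<Sum>b\<in>B. measure_pmf.prob (Pc lab) (Eb b))"
      using finB by (intro measure_pmf.finite_measure_subadditive_finite) auto
    also have "\<dots> \<le> (\<Sum>b\<in>B. exp (- \<epsilon> * m0 / 2))" using pEb by (intro sum_mono) auto
    also have "(\<Sum>a\<in>A. exp (- \<epsilon> * m0 / 2)) + (\<Sum>b\<in>B. exp (- \<epsilon> * m0 / 2))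
        = real (card A + card B) * exp (- \<epsilon> * m0 / 2)" by (simp add: algebra_simps)
    also have "\<dots> \<le> \<eta>"
    proof -
      have "card A + card B = card (A \<union> B)" using finA finB AB by (simp add: card_Un_disjoint)
      also have "\<dots> \<le> card {..<N}" using ABN by (intro card_mono) auto
      finally have "real (card A + card B) \<le> real N" by simp
      thus ?thesis unfolding \<eta>_def by (simp add: mult_right_mono)
    qed
    finally show ?thesis by simp
  qed
  have lab_part: "measure_pmf.prob Plab (- LG) \<le> 2 * exp (- real N * p0 / 4)"
  proof -
    have cntA: "{x\<in>{..<N}. lab x = SideA} = As lab" for lab unfolding As_def by auto
    have cntB: "{x\<in>{..<N}. lab x = SideB} = Bs lab" for lab unfolding Bs_def by auto
    have e: "(1 - exp (- 1)) * p0 * real N \<ge> p0 * real N / 2"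
    proof -
      have "1 / 2 \<le> 1 - exp (- 1 :: real)" using exp_neg1_le by simp
      from mult_right_mono[OF this, of "p0 * real N"] p0 show ?thesis by simp
    qed
    have tail: "exp (m0 - (1 - exp (- 1)) * p0 * real N) \<le> exp (- real N * p0 / 4)"
      using e unfolding m0_def by simp
    have pA': "measure_pmf.prob Plab {lab. real (card {x\<in>{..<N}. lab x = SideA}) \<le> m0}
        \<le> exp (m0 - (1 - exp (- 1)) * p0 * real (card {..<N}))"
      unfolding Plab_def
      by (rule chernoff_lower[where Ev = "\<lambda>_ v. v = SideA"]) (use side_pmf_probs[OF pA pB] p0 in auto)
    have pB': "measure_pmf.prob Plab {lab. real (card {x\<in>{..<N}. lab x = SideB}) \<le> m0}
        \<le> exp (m0 - (1 - exp (- 1)) * p0 * real (card {..<N}))"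
      unfolding Plab_def
      by (rule chernoff_lower[where Ev = "\<lambda>_ v. v = SideB"]) (use side_pmf_probs[OF pA pB] p0 in auto)
    have "- LG = {lab. real (card {x\<in>{..<N}. lab x = SideA}) \<le> m0} \<union> {lab. real (card {x\<in>{..<N}. lab x = SideB}) \<le> m0}"
      unfolding LG_def cntA cntB by auto
    hence "measure_pmf.prob Plab (- LG) \<le> measure_pmf.prob Plab {lab. real (card {x\<in>{..<N}. lab x = SideA}) \<le> m0}
        + measure_pmf.prob Plab {lab. real (card {x\<in>{..<N}. lab x = SideB}) \<le> m0}"
      by (simp add: measure_Un_le)
    thus ?thesis using pA' pB' tail by (simp only: card_lessThan)
  qed
  have eta0: "\<eta> \<ge> 0" unfolding \<eta>_def by simp
  have "measure_pmf.prob (H_graph N pA pB 0 0 q) (- Good) \<le> measure_pmf.prob Plab (- LG) + \<eta>"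
    unfolding H by (rule bind_bad_bound[OF edge_part eta0])
  hence bad: "measure_pmf.prob (H_graph N pA pB 0 0 q) (- Good) \<le> 2 * exp (- real N * p0 / 4) + \<eta>"
    using lab_part by simp
  have "measure_pmf.prob (H_graph N pA pB 0 0 q) Good = 1 - measure_pmf.prob (H_graph N pA pB 0 0 q) (- Good)"
    using measure_pmf.prob_compl[of Good "H_graph N pA pB 0 0 q"] by (simp add: Compl_eq_Diff_UNIV)
  moreover have "\<eta> = real N * exp (- \<epsilon> * real N * p0 / 8)" unfolding \<eta>_def m0_def by simp
  ultimately show ?thesis using bad unfolding Good_def by simp
qed


theorem lemma6p9:
  fixes d :: nat and \<alpha> \<delta> :: real
  assumes "d \<ge> 1" and "\<alpha> > 0" and "\<alpha> < 1 / (real d + 1)" and "\<delta> > 0"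
  shows "\<forall>C > 0. \<forall>\<^sub>F n in sequentially.
    measure_pmf.prob
      (H_graph (n - (2 * d - 1))
         (real n powr (- real (d - 1) * \<alpha>) * (1 - real n powr (- \<alpha>)) ^ d)
         (real n powr (- real d * \<alpha>) * (1 - real n powr (- \<alpha>)) ^ (d - 1))
         0 0 (1 - real n powr (- \<alpha>)))
      {G. card (fst G) \<ge> 2 \<and> no_isolated G \<and> spectral_gap G > 1 - \<delta>}
    \<ge> 1 - real n powr (- C)"
proof (intro allI impI)
  fix C :: real assume C: "C > 0"
  note d1 = assms(1) and \<alpha>0 = assms(2) and \<alpha>1 = assms(3) and \<delta>0 = assms(4)
  define \<epsilon> where "\<epsilon> = min \<delta> 1 / 4"
  define \<gamma> where "\<gamma> = 1 - real d * \<alpha>"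
  define \<kappa> :: real where "\<kappa> = 1 / 2 ^ (d + 1)"
  define \<beta> where "\<beta> = \<epsilon> * \<kappa> / 8"
  have \<epsilon>0: "\<epsilon> > 0" and \<epsilon>4: "\<epsilon> \<le> 1 / 4" unfolding \<epsilon>_def using \<delta>0 by auto
  have \<epsilon>1: "\<epsilon> < 1" using \<epsilon>4 by simp
  have \<epsilon>\<delta>: "\<epsilon> / (1 - \<epsilon>) < \<delta>"
  proof -
    have "\<epsilon> / (1 - \<epsilon>) \<le> \<epsilon> / (3 / 4)" using \<epsilon>0 \<epsilon>4 by (intro divide_left_mono) auto
    also have "\<dots> = min \<delta> 1 / 3" unfolding \<epsilon>_def by simp
    also have "\<dots> < \<delta>" using \<delta>0 by (simp add: min_def)
    finally show ?thesis .
  qed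
  have \<gamma>0: "\<gamma> > 0"
  proof -
    have "\<alpha> * (real d + 1) < 1" using \<alpha>1 by (simp add: field_simps)
    thus ?thesis unfolding \<gamma>_def using \<alpha>0 by (simp add: algebra_simps)
  qed
  have \<kappa>0: "\<kappa> > 0" unfolding \<kappa>_def by simp
  have \<beta>0: "\<beta> > 0" unfolding \<beta>_def using \<epsilon>0 \<kappa>0 by simp
  have lim1: "((\<lambda>n. real n powr (- \<alpha>)) \<longlongrightarrow> 0) at_top" using \<alpha>0 by real_asymp
  have ev1: "\<forall>\<^sub>F n in sequentially. real n powr (- \<alpha>) < min (1 / 2) (\<epsilon> / 4)"
    using order_tendstoD(2)[OF lim1, of "min (1 / 2) (\<epsilon> / 4)"] \<epsilon>0 by simp
  have lim2: "((\<lambda>n. (real n + 2) * exp (- \<beta> * real n powr \<gamma>) * real n powr C) \<longlongrightarrow> 0) at_top"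
    using \<beta>0 \<gamma>0 by real_asymp
  have ev2: "\<forall>\<^sub>F n in sequentially. (real n + 2) * exp (- \<beta> * real n powr \<gamma>) * real n powr C < 1"
    using order_tendstoD(2)[OF lim2, of 1] by simp
  have ev3: "\<forall>\<^sub>F n in sequentially. n \<ge> 4 * d + 1" by (rule eventually_ge_at_top)
  show "\<forall>\<^sub>F n in sequentially.
    measure_pmf.prob
      (H_graph (n - (2 * d - 1))
         (real n powr (- real (d - 1) * \<alpha>) * (1 - real n powr (- \<alpha>)) ^ d)
         (real n powr (- real d * \<alpha>) * (1 - real n powr (- \<alpha>)) ^ (d - 1))
         0 0 (1 - real n powr (- \<alpha>)))
      {G. card (fst G) \<ge> 2 \<and> no_isolated G \<and> spectral_gap G > 1 - \<delta>}
    \<ge> 1 - real n powr (- C)"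
    using ev1 ev2 ev3
  proof eventually_elim
    fix n :: nat
    assume h1: "real n powr (- \<alpha>) < min (1 / 2) (\<epsilon> / 4)"
      and h2: "(real n + 2) * exp (- \<beta> * real n powr \<gamma>) * real n powr C < 1"
      and h3: "n \<ge> 4 * d + 1"
    define x where "x = real n powr (- \<alpha>)"
    define y where "y = real n powr (- real (d - 1) * \<alpha>)"
    define N where "N = n - (2 * d - 1)"
    define pA where "pA = y * (1 - x) ^ d"
    define pB where "pB = real n powr (- real d * \<alpha>) * (1 - x) ^ (d - 1)"
    define q where "q = 1 - x"
    define p0 where "p0 = real n powr (- real d * \<alpha>) / 2 ^ d"
    have n1: "real n \<ge> 1" using h3 by simp
    have x0: "x > 0" unfolding x_def using n1 by simp
    have x2: "x \<le> 1 / 2" and x\<epsilon>: "x \<le> \<epsilon> / 4" using h1 unfolding x_def by auto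
    have y0: "y > 0" unfolding y_def using n1 by simp
    have y1: "y \<le> 1"
    proof -
      have "1 \<le> real n powr (real (d - 1) * \<alpha>)" using n1 \<alpha>0 by (intro ge_one_powr_ge_zero) auto
      moreover have "y = inverse (real n powr (real (d - 1) * \<alpha>))"
        unfolding y_def by (simp add: powr_minus[symmetric])
      ultimately show ?thesis by (simp add: inverse_le_1_iff)
    qed
    have dd: "real d = real (d - 1) + 1" using d1 by simp
    have yx: "real n powr (- real d * \<alpha>) = y * x"
      unfolding y_def x_def dd by (simp add: powr_add[symmetric] algebra_simps)
    have pw: "(1 - x) ^ d = (1 - x) ^ (d - 1) * (1 - x)" using d1
      by (metis Suc_diff_1 less_one not_le power_Suc2 zero_less_iff_neq_zero)
    have omx: "1 / 2 \<le> 1 - x" "1 - x \<le> 1" using x2 x0 by auto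
    have pd1: "(1 - x) ^ (d - 1) \<le> 1" "0 \<le> (1 - x) ^ (d - 1)" using omx by (auto intro: power_le_one)
    have pA0: "0 \<le> pA" unfolding pA_def using y0 omx by simp
    have pA1: "pA < 1"
    proof -
      have "pA = y * (1 - x) ^ (d - 1) * (1 - x)" unfolding pA_def pw by simp
      also have "\<dots> \<le> 1 * 1 * (1 - x)" using y1 y0 pd1 omx
        by (intro mult_mono) auto
      finally show ?thesis using x0 by simp
    qed
    have pB0: "0 \<le> pB" unfolding pB_def using omx by simp
    have pAB: "pA + pB \<le> 1"
    proof -
      have "pA + pB = y * (1 - x) ^ (d - 1)" unfolding pA_def pB_def yx pw by (simp add: algebra_simps)
      also have "\<dots> \<le> 1 * 1" using y1 y0 pd1 by (intro mult_mono) auto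
      finally show ?thesis by simp
    qed
    have half: "(1 / 2 :: real) ^ d \<le> (1 - x) ^ d" using omx by (intro power_mono) auto
    have half': "(1 / 2 :: real) ^ d \<le> (1 - x) ^ (d - 1)"
    proof -
      have "(1 / 2 :: real) ^ d \<le> (1 / 2) ^ (d - 1)" by (rule power_decreasing) auto
      also have "\<dots> \<le> (1 - x) ^ (d - 1)" using omx by (intro power_mono) auto
      finally show ?thesis .
    qed
    have p0pos: "0 < p0" unfolding p0_def using n1 by simp
    have p0A: "p0 \<le> pA"
    proof -
      have "p0 = y * x * (1 / 2) ^ d" unfolding p0_def yx by (simp add: power_one_over field_simps)
      also have "\<dots> \<le> y * 1 * (1 - x) ^ d" using y0 x0 x2 half
        by (intro mult_mono) auto
      finally show ?thesis unfolding pA_def by simp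
    qed
    have p0B: "p0 \<le> pB"
    proof -
      have "p0 = y * x * (1 / 2) ^ d" unfolding p0_def yx by (simp add: power_one_over field_simps)
      also have "\<dots> \<le> y * x * (1 - x) ^ (d - 1)" using y0 x0 half'
        by (intro mult_left_mono) auto
      finally show ?thesis unfolding pB_def yx by simp
    qed
    have q01: "0 \<le> q" "q \<le> 1" unfolding q_def using omx x0 by auto
    have qe: "(exp 1 - 1) * (1 - q) \<le> \<epsilon> / 2"
    proof -
      have "(exp 1 - 1) * (1 - q) = (exp 1 - 1) * x" unfolding q_def by simp
      also have "\<dots> \<le> 2 * x" using exp_le x0 by (intro mult_right_mono) auto
      finally show ?thesis using x\<epsilon> by simp
    qed
    have main: "measure_pmf.prob (H_graph N pA pB 0 0 q)
           {G. card (fst G) \<ge> 2 \<and> no_isolated G \<and> spectral_gap G > 1 - \<delta>}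
         \<ge> 1 - (2 * exp (- real N * p0 / 4) + real N * exp (- \<epsilon> * real N * p0 / 8))"
      by (rule fixed_n_bound[OF pA0 pA1 pB0 pAB p0pos p0A p0B q01 qe \<epsilon>0 \<epsilon>1 \<epsilon>\<delta>])
    have Nn: "real N \<le> real n" "real N \<ge> real n / 2"
    proof -
      have "2 * d - 1 \<le> n" using h3 by simp
      hence "real N = real n - real (2 * d - 1)" unfolding N_def by (simp add: of_nat_diff)
      moreover have "real (2 * d - 1) \<le> real n / 2" using h3 by simp
      ultimately show "real N \<le> real n" "real N \<ge> real n / 2" by auto
    qed
    have npow: "real n * real n powr (- real d * \<alpha>) = real n powr \<gamma>"
    proof -
      have "real n powr \<gamma> = real n powr (1 + (- real d * \<alpha>))" unfolding \<gamma>_def by simp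
      also have "\<dots> = real n powr 1 * real n powr (- real d * \<alpha>)" by (rule powr_add)
      finally show ?thesis using n1 by simp
    qed
    have Zb: "real N * p0 \<ge> \<kappa> * real n powr \<gamma>"
    proof -
      have "real N * p0 \<ge> real n / 2 * p0" using Nn(2) p0pos by (intro mult_right_mono) auto
      moreover have "real n / 2 * p0 = \<kappa> * real n powr \<gamma>"
        unfolding p0_def \<kappa>_def npow[symmetric] by (simp add: field_simps)
      ultimately show ?thesis by simp
    qed
    define K where "K = real n powr \<gamma>"
    have K0: "K \<ge> 0" unfolding K_def by simp
    have t1: "exp (- real N * p0 / 4) \<le> exp (- \<beta> * K)"
    proof -
      have "\<beta> * K \<le> \<kappa> / 4 * K" unfolding \<beta>_def using \<epsilon>4 \<kappa>0 K0 \<epsilon>0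
        by (intro mult_right_mono) (auto simp: field_simps)
      also have "\<dots> \<le> real N * p0 / 4" using Zb unfolding K_def by simp
      finally show ?thesis by simp
    qed
    have t2: "real N * exp (- \<epsilon> * real N * p0 / 8) \<le> real n * exp (- \<beta> * K)"
    proof (rule mult_mono)
      show "real N \<le> real n" by (rule Nn(1))
      have "\<beta> * K = \<epsilon> / 8 * (\<kappa> * K)" unfolding \<beta>_def by simp
      also have "\<dots> \<le> \<epsilon> / 8 * (real N * p0)" using Zb \<epsilon>0 unfolding K_def by (intro mult_left_mono) auto
      finally show "exp (- \<epsilon> * real N * p0 / 8) \<le> exp (- \<beta> * K)" by simp
    qed auto
    have "2 * exp (- real N * p0 / 4) + real N * exp (- \<epsilon> * real N * p0 / 8)
        \<le> real n * exp (- \<beta> * K) + 2 * exp (- \<beta> * K)" using t1 t2 by linarith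
    also have "\<dots> = (real n + 2) * exp (- \<beta> * K)" by (simp add: algebra_simps)
    also have "\<dots> \<le> real n powr (- C)"
    proof -
      have "(real n + 2) * exp (- \<beta> * K) * real n powr C \<le> 1" using h2 unfolding K_def by simp
      moreover have "real n powr C > 0" using n1 by simp
      ultimately have "(real n + 2) * exp (- \<beta> * K) \<le> 1 / real n powr C"
        by (simp add: field_simps)
      thus ?thesis by (simp add: powr_minus_divide)
    qed
    finally have err: "2 * exp (- real N * p0 / 4) + real N * exp (- \<epsilon> * real N * p0 / 8) \<le> real n powr (- C)" .
    show "measure_pmf.prob
      (H_graph (n - (2 * d - 1))
         (real n powr (- real (d - 1) * \<alpha>) * (1 - real n powr (- \<alpha>)) ^ d)
         (real n powr (- real d * \<alpha>) * (1 - real n powr (- \<alpha>)) ^ (d - 1))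
         0 0 (1 - real n powr (- \<alpha>)))
      {G. card (fst G) \<ge> 2 \<and> no_isolated G \<and> spectral_gap G > 1 - \<delta>}
    \<ge> 1 - real n powr (- C)"
      using main err unfolding N_def pA_def pB_def q_def x_def y_def by simp
  qed
qed


end
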